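(* Let $\rho^\star \in \mathbb{R}^{n\times n}$ be an optimal solution of the SDP $\max_{\rho} \operatorname{tr}(C\rho)$ subject to $\rho \succeq 0$, $\rho_{ii} = 1/n$ for all $i\in[n]$, where $C\in\mathbb{R}^{n\times n}$ is a symmetric cost matrix normalized in operator norm, $\|C\|=1$, with the block structure $C = \begin{pmatrix} 0 & B \\ B^T & 0 \end{pmatrix}$ for some $B\in\mathbb{R}^{n/2\times n/2}$. Let $\rho\in \mathbb{R}^{n\times n}$ be a positive semidefinite approximate solution with \[ \operatorname{tr}(C\rho^\star) - \operatorname{tr}(C\rho) \leq \epsilon \quad\text{and}\quad \sum_i \Big|\rho_{ii}-\frac{1}{n}\Big| \leq \epsilon, \] with $0\leq\epsilon\leq 1/2$. Let $x\in \{-1,1\}^{n}$ be the vector obtained by applying the randomized rounding procedure to $\rho$, i.e. compute the symmetric matrix square root $\sqrt{\rho}$, sample $g_j \overset{\mathrm{iid}}{\sim} \mathcal{N}(0,1)$ for $j\in[n]$, and set $x_i = \operatorname{sgn}\big(\sum_j (\sqrt{\rho})_{ij} g_j\big)$ for $i\in[n]$. Then \[ \mathbb{E}[x^T C x] \geq \left(\frac{4}{\pi} - 1\right) n \operatorname{tr}(C \rho^\star) - \mathcal{O}(n\epsilon^{1/3}). \]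
   Context: The expectation is over the Gaussian vector $g$ in the rounding procedure. $\|C\|$ denotes the largest singular value of $C$. *)

theory Defs
  imports "HOL-Probability.Probability"
begin

text \<open>Real n x n matrices are represented as functions nat => nat => real,
  only entries with indices below n being relevant (indices 0..n-1 stand for [n]).\<close>

definition mat_trace :: "nat \<Rightarrow> (nat \<Rightarrow> nat \<Rightarrow> real) \<Rightarrow> real" where
  "mat_trace n A = (\<Sum>i<n. A i i)"

definition mat_mult :: "nat \<Rightarrow> (nat \<Rightarrow> nat \<Rightarrow> real) \<Rightarrow> (nat \<Rightarrow> nat \<Rightarrow> real) \<Rightarrow> (nat \<Rightarrow> nat \<Rightarrow> real)" where
  "mat_mult n A B = (\<lambda>i j. \<Sum>k<n. A i k * B k j)"

definition psd :: "nat \<Rightarrow> (nat \<Rightarrow> nat \<Rightarrow> real) \<Rightarrow> bool" where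
  "psd n A \<longleftrightarrow> (\<forall>i<n. \<forall>j<n. A i j = A j i) \<and>
     (\<forall>x :: nat \<Rightarrow> real. 0 \<le> (\<Sum>i<n. \<Sum>j<n. x i * A i j * x j))"

definition op_norm :: "nat \<Rightarrow> (nat \<Rightarrow> nat \<Rightarrow> real) \<Rightarrow> real" where
  "op_norm n A = Sup {sqrt (\<Sum>i<n. (\<Sum>j<n. A i j * x j)\<^sup>2) | x :: nat \<Rightarrow> real.
                        (\<Sum>j<n. (x j)\<^sup>2) \<le> 1}"

definition mat_sqrt :: "nat \<Rightarrow> (nat \<Rightarrow> nat \<Rightarrow> real) \<Rightarrow> (nat \<Rightarrow> nat \<Rightarrow> real)" where
  "mat_sqrt n A = (THE S. psd n S \<and> (\<forall>i<n. \<forall>j<n. mat_mult n S S i j = A i j) \<and>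
                      (\<forall>i j. \<not> (i < n \<and> j < n) \<longrightarrow> S i j = 0))"

text \<open>Block matrix [[0, B],[B^T, 0]] of size 2m x 2m, B of size m x m.\<close>
definition block_cost :: "nat \<Rightarrow> (nat \<Rightarrow> nat \<Rightarrow> real) \<Rightarrow> (nat \<Rightarrow> nat \<Rightarrow> real)" where
  "block_cost m B = (\<lambda>i j. if i < m \<and> m \<le> j \<and> j < 2*m then B i (j - m)
                          else if m \<le> i \<and> i < 2*m \<and> j < m then B j (i - m)
                          else 0)"

definition sdp_feasible :: "nat \<Rightarrow> (nat \<Rightarrow> nat \<Rightarrow> real) \<Rightarrow> bool" where
  "sdp_feasible n \<rho> \<longleftrightarrow> psd n \<rho> \<and> (\<forall>i<n. \<rho> i i = 1 / real n)"

definition sdp_optimal :: "nat \<Rightarrow> (nat \<Rightarrow> nat \<Rightarrow> real) \<Rightarrow> (nat \<Rightarrow> nat \<Rightarrow> real) \<Rightarrow> bool" where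
  "sdp_optimal n C \<rho> \<longleftrightarrow> sdp_feasible n \<rho> \<and>
     (\<forall>\<sigma>. sdp_feasible n \<sigma> \<longrightarrow> mat_trace n (mat_mult n C \<sigma>) \<le> mat_trace n (mat_mult n C \<rho>))"

text \<open>Sign with values in {-1,1} (convention sign 0 = 1; a null event for nonzero rows).\<close>
definition sgn_pm :: "real \<Rightarrow> real" where
  "sgn_pm t = (if t < 0 then -1 else 1)"

definition gauss_vec :: "nat \<Rightarrow> (nat \<Rightarrow> real) measure" where
  "gauss_vec n = PiM {..<n} (\<lambda>_. density lborel std_normal_density)"

definition rounding :: "nat \<Rightarrow> (nat \<Rightarrow> nat \<Rightarrow> real) \<Rightarrow> (nat \<Rightarrow> real) \<Rightarrow> nat \<Rightarrow> real" where
  "rounding n \<rho> g = (\<lambda>i. sgn_pm (\<Sum>j<n. mat_sqrt n \<rho> i j * g j))"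

definition quad_form :: "nat \<Rightarrow> (nat \<Rightarrow> nat \<Rightarrow> real) \<Rightarrow> (nat \<Rightarrow> real) \<Rightarrow> real" where
  "quad_form n C x = (\<Sum>i<n. \<Sum>j<n. x i * C i j * x j)"

end

theory Submission
  imports Defs
begin

definition zo :: "nat \<Rightarrow> (nat\<Rightarrow>nat\<Rightarrow>real) \<Rightarrow> bool" where
  "zo n A \<longleftrightarrow> (\<forall>i j. \<not>(i<n \<and> j<n) \<longrightarrow> A i j = 0)"
definition symn :: "nat \<Rightarrow> (nat\<Rightarrow>nat\<Rightarrow>real) \<Rightarrow> bool" where
  "symn n A \<longleftrightarrow> (\<forall>i<n. \<forall>j<n. A i j = A j i)"
definition idm :: "nat \<Rightarrow> nat\<Rightarrow>nat\<Rightarrow>real" where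
  "idm n = (\<lambda>i j. if i = j \<and> i < n then 1 else 0)"
definition bil :: "nat \<Rightarrow> (nat\<Rightarrow>nat\<Rightarrow>real) \<Rightarrow> (nat\<Rightarrow>real) \<Rightarrow> (nat\<Rightarrow>real) \<Rightarrow> real" where
  "bil n A x y = (\<Sum>i<n. \<Sum>j<n. x i * A i j * y j)"
definition nrm :: "nat \<Rightarrow> (nat\<Rightarrow>real) \<Rightarrow> real" where
  "nrm n x = (\<Sum>i<n. (x i)^2)"
definition mv :: "nat \<Rightarrow> (nat\<Rightarrow>nat\<Rightarrow>real) \<Rightarrow> (nat\<Rightarrow>real) \<Rightarrow> nat \<Rightarrow> real" where
  "mv n A x = (\<lambda>i. \<Sum>j<n. A i j * x j)"

lemma qf_bil: "quad_form n A x = bil n A x x"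
  by (simp add: quad_form_def bil_def)

lemma bil_add1: "bil n A (\<lambda>i. x i + y i) z = bil n A x z + bil n A y z"
  by (simp add: bil_def algebra_simps sum.distrib)
lemma bil_add2: "bil n A z (\<lambda>i. x i + y i) = bil n A z x + bil n A z y"
  by (simp add: bil_def algebra_simps sum.distrib)
lemma bil_diff1: "bil n A (\<lambda>i. x i - y i) z = bil n A x z - bil n A y z"
  by (simp add: bil_def algebra_simps sum_subtractf)
lemma bil_diff2: "bil n A z (\<lambda>i. x i - y i) = bil n A z x - bil n A z y"
  by (simp add: bil_def algebra_simps sum_subtractf)
lemma bil_scale1: "bil n A (\<lambda>i. t * x i) z = t * bil n A x z"
  by (simp add: bil_def sum_distrib_left algebra_simps)
lemma bil_scale2: "bil n A z (\<lambda>i. t * x i) = t * bil n A z x"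
  by (simp add: bil_def sum_distrib_left algebra_simps)
lemma bil_madd: "bil n (\<lambda>i j. A i j + B i j) x y = bil n A x y + bil n B x y"
  by (simp add: bil_def algebra_simps sum.distrib)
lemma bil_mdiff: "bil n (\<lambda>i j. A i j - B i j) x y = bil n A x y - bil n B x y"
  by (simp add: bil_def algebra_simps sum_subtractf)
lemma bil_mscale: "bil n (\<lambda>i j. t * A i j) x y = t * bil n A x y"
  by (simp add: bil_def sum_distrib_left algebra_simps)
lemma bil_mv: "bil n A x y = (\<Sum>i<n. x i * mv n A y i)"
  by (simp add: bil_def mv_def sum_distrib_left algebra_simps)

lemma bil_sym: assumes "symn n A" shows "bil n A x y = bil n A y x"
proof -
  have "bil n A x y = (\<Sum>j<n. \<Sum>i<n. x i * A i j * y j)"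
    unfolding bil_def by (rule sum.swap)
  also have "\<dots> = bil n A y x" unfolding bil_def
    using assms unfolding symn_def by (intro sum.cong refl) (auto simp: algebra_simps)
  finally show ?thesis .
qed

lemma disc_lemma:
  fixes a b c :: real
  assumes c: "0 \<le> c" and H: "\<And>t. 0 \<le> a + 2*b*t + c*t^2"
  shows "b^2 \<le> a*c"
proof (cases "c = 0")
  case True
  show ?thesis
  proof (rule ccontr)
    assume "\<not> ?thesis"
    hence "b \<noteq> 0" using True by auto
    have "0 \<le> a + 2*b*(-(\<bar>a\<bar>+1)/(2*b)) + c*(-(\<bar>a\<bar>+1)/(2*b))^2" by (rule H)
    also have "\<dots> = a - (\<bar>a\<bar> + 1)" using \<open>b \<noteq> 0\<close> True by (simp add: field_simps)
    finally show False by linarith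
  qed
next
  case False
  hence cp: "c > 0" using c by auto
  have "0 \<le> a + 2*b*(-b/c) + c*(-b/c)^2" by (rule H)
  also have "\<dots> = a - b^2/c" using cp by (simp add: field_simps power2_eq_square)
  finally have "b^2/c \<le> a" by simp
  thus ?thesis using cp by (simp add: field_simps)
qed

lemma bil_expand:
  assumes "symn n A"
  shows "bil n A (\<lambda>i. x i + t * y i) (\<lambda>i. x i + t * y i)
     = bil n A x x + 2 * bil n A x y * t + bil n A y y * t^2"
  using bil_sym[OF assms, of y x]
  by (simp add: bil_add1 bil_add2 bil_scale1 bil_scale2 power2_eq_square algebra_simps)

lemma psd_cs:
  assumes "symn n A" and P: "\<And>z. 0 \<le> bil n A z z"
  shows "(bil n A x y)^2 \<le> bil n A x x * bil n A y y"
  using disc_lemma[OF P, of "bil n A x x" "bil n A x y"] bil_expand[OF assms(1)] P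
  by metis

lemma psd_null:
  assumes "symn n A" and P: "\<And>z. 0 \<le> bil n A z z" and "bil n A x x = 0"
  shows "bil n A y x = 0"
  using psd_cs[OF assms(1,2), of y x] assms(3) bil_sym[OF assms(1), of x y] by simp

lemma psd_null_mv:
  assumes "symn n A" and P: "\<And>z. 0 \<le> bil n A z z" and "bil n A x x = 0" and "i < n"
  shows "mv n A x i = 0"
proof -
  have "bil n A (mv n A x) x = 0" by (rule psd_null[OF assms(1-3)])
  hence "(\<Sum>i<n. (mv n A x i)^2) = 0" by (simp add: bil_mv power2_eq_square)
  hence "(mv n A x i)^2 = 0" using assms(4) by (subst (asm) sum_nonneg_eq_0_iff) auto
  thus ?thesis by simp
qed

lemma nrm_nonneg: "0 \<le> nrm n x" by (simp add: nrm_def sum_nonneg)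

lemma bil_idm: "bil n (idm n) x y = (\<Sum>i<n. x i * y i)"
proof -
  have "bil n (idm n) x y = (\<Sum>i<n. \<Sum>j<n. if j = i then x i * y i else 0)"
    unfolding bil_def idm_def by (intro sum.cong refl) auto
  also have "\<dots> = (\<Sum>i<n. x i * y i)" by simp
  finally show ?thesis .
qed

lemma bil_idm_nrm: "bil n (idm n) x x = nrm n x"
  by (simp add: bil_idm nrm_def power2_eq_square)

lemma contraction:
  assumes "symn n A" and P: "\<And>z. 0 \<le> bil n A z z" and Q: "\<And>z. bil n A z z \<le> nrm n z"
  shows "nrm n (mv n A x) \<le> nrm n x"
proof -
  let ?y = "mv n A x"
  have e: "bil n A ?y x = nrm n ?y" by (simp add: bil_mv nrm_def power2_eq_square)
  have "(nrm n ?y)^2 \<le> bil n A ?y ?y * bil n A x x" using psd_cs[OF assms(1,2), of ?y x] e by simp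
  also have "\<dots> \<le> nrm n ?y * nrm n x" using P Q nrm_nonneg by (intro mult_mono) auto
  finally have "(nrm n ?y)^2 \<le> nrm n ?y * nrm n x" .
  thus ?thesis using nrm_nonneg[of n ?y]
    by (cases "nrm n ?y = 0") (auto simp: power2_eq_square nrm_nonneg)
qed


lemma mm_assoc: "mat_mult n (mat_mult n A B) C = mat_mult n A (mat_mult n B C)"
proof -
  have "(\<Sum>k<n. (\<Sum>l<n. A i l * B l k) * C k j) = (\<Sum>l<n. A i l * (\<Sum>k<n. B l k * C k j))" for i j
  proof -
    have "(\<Sum>k<n. (\<Sum>l<n. A i l * B l k) * C k j) = (\<Sum>k<n. \<Sum>l<n. A i l * B l k * C k j)"
      by (simp add: sum_distrib_right)
    also have "\<dots> = (\<Sum>l<n. \<Sum>k<n. A i l * B l k * C k j)" by (rule sum.swap)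
    also have "\<dots> = (\<Sum>l<n. A i l * (\<Sum>k<n. B l k * C k j))"
      by (simp add: sum_distrib_left mult.assoc)
    finally show ?thesis .
  qed
  thus ?thesis by (simp add: mat_mult_def fun_eq_iff)
qed

lemma mm_idm_left: assumes "zo n A" shows "mat_mult n (idm n) A = A"
proof (intro ext)
  fix i j
  show "mat_mult n (idm n) A i j = A i j"
  proof (cases "i < n")
    case True
    have "mat_mult n (idm n) A i j = (\<Sum>k<n. if k = i then A i j else 0)"
      unfolding mat_mult_def idm_def by (intro sum.cong) auto
    thus ?thesis using True by simp
  next
    case False
    thus ?thesis using assms unfolding mat_mult_def idm_def zo_def by auto
  qed
qed

lemma mm_idm_right: assumes "zo n A" shows "mat_mult n A (idm n) = A"
proof (intro ext)
  fix i j
  show "mat_mult n A (idm n) i j = A i j"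
  proof (cases "j < n")
    case True
    have "mat_mult n A (idm n) i j = (\<Sum>k<n. if k = j then A i j else 0)"
      unfolding mat_mult_def idm_def by (intro sum.cong) auto
    thus ?thesis using True by simp
  next
    case False
    thus ?thesis using assms unfolding mat_mult_def idm_def zo_def by auto
  qed
qed

lemma zo_mm: "zo n A \<Longrightarrow> zo n B \<Longrightarrow> zo n (mat_mult n A B)"
  unfolding zo_def mat_mult_def by auto

lemma zo_idm: "zo n (idm n)" unfolding zo_def idm_def by auto

lemma zo_add: "zo n A \<Longrightarrow> zo n B \<Longrightarrow> zo n (\<lambda>i j. A i j + B i j)"
  unfolding zo_def by auto
lemma zo_diff: "zo n A \<Longrightarrow> zo n B \<Longrightarrow> zo n (\<lambda>i j. A i j - B i j)"
  unfolding zo_def by auto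
lemma zo_scale: "zo n A \<Longrightarrow> zo n (\<lambda>i j. r * A i j)"
  unfolding zo_def by auto

lemma symn_add: "symn n A \<Longrightarrow> symn n B \<Longrightarrow> symn n (\<lambda>i j. A i j + B i j)"
  unfolding symn_def by auto
lemma symn_diff: "symn n A \<Longrightarrow> symn n B \<Longrightarrow> symn n (\<lambda>i j. A i j - B i j)"
  unfolding symn_def by auto
lemma symn_scale: "symn n A \<Longrightarrow> symn n (\<lambda>i j. r * A i j)"
  unfolding symn_def by auto
lemma symn_idm: "symn n (idm n)" unfolding symn_def idm_def by auto

lemma mm_add_left: "mat_mult n (\<lambda>i j. A i j + B i j) C = (\<lambda>i j. mat_mult n A C i j + mat_mult n B C i j)"
  by (simp add: mat_mult_def algebra_simps sum.distrib)
lemma mm_add_right: "mat_mult n C (\<lambda>i j. A i j + B i j) = (\<lambda>i j. mat_mult n C A i j + mat_mult n C B i j)"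
  by (simp add: mat_mult_def algebra_simps sum.distrib)
lemma mm_diff_left: "mat_mult n (\<lambda>i j. A i j - B i j) C = (\<lambda>i j. mat_mult n A C i j - mat_mult n B C i j)"
  by (simp add: mat_mult_def algebra_simps sum_subtractf)
lemma mm_diff_right: "mat_mult n C (\<lambda>i j. A i j - B i j) = (\<lambda>i j. mat_mult n C A i j - mat_mult n C B i j)"
  by (simp add: mat_mult_def algebra_simps sum_subtractf)
lemma mm_scale_left: "mat_mult n (\<lambda>i j. r * A i j) C = (\<lambda>i j. r * mat_mult n A C i j)"
  by (simp add: mat_mult_def sum_distrib_left algebra_simps)
lemma mm_scale_right: "mat_mult n C (\<lambda>i j. r * A i j) = (\<lambda>i j. r * mat_mult n C A i j)"
  by (simp add: mat_mult_def sum_distrib_left algebra_simps)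

lemma mv_mm: "mv n (mat_mult n A B) y = mv n A (mv n B y)"
proof -
  have "(\<Sum>j<n. (\<Sum>k<n. A i k * B k j) * y j) = (\<Sum>k<n. A i k * (\<Sum>j<n. B k j * y j))" for i
  proof -
    have "(\<Sum>j<n. (\<Sum>k<n. A i k * B k j) * y j) = (\<Sum>j<n. \<Sum>k<n. A i k * B k j * y j)"
      by (simp add: sum_distrib_right)
    also have "\<dots> = (\<Sum>k<n. \<Sum>j<n. A i k * B k j * y j)" by (rule sum.swap)
    also have "\<dots> = (\<Sum>k<n. A i k * (\<Sum>j<n. B k j * y j))"
      by (simp add: sum_distrib_left mult.assoc)
    finally show ?thesis .
  qed
  thus ?thesis by (simp add: mv_def mat_mult_def fun_eq_iff)
qed

lemma bil_mm: "bil n (mat_mult n P Q) x y = bil n P x (mv n Q y)"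
  by (simp add: bil_mv mv_mm)

lemma bil_mv_left: "symn n P \<Longrightarrow> bil n P x z = (\<Sum>i<n. mv n P x i * z i)"
  by (subst bil_sym) (auto simp: bil_mv mult.commute)

lemma bil_sandwich:
  assumes "symn n P"
  shows "bil n (mat_mult n P (mat_mult n A P)) x x = bil n A (mv n P x) (mv n P x)"
proof -
  let ?z = "mv n (mat_mult n A P) x"
  have "bil n (mat_mult n P (mat_mult n A P)) x x = bil n P x ?z" by (rule bil_mm)
  also have "\<dots> = (\<Sum>i<n. mv n P x i * ?z i)" by (rule bil_mv_left[OF assms])
  also have "\<dots> = bil n A (mv n P x) (mv n P x)" by (simp add: bil_mv mv_mm)
  finally show ?thesis .
qed

lemma symn_mm_swap:
  assumes "symn n A" "symn n B" "i < n" "j < n"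
  shows "mat_mult n A B j i = mat_mult n B A i j"
  using assms unfolding mat_mult_def symn_def by (intro sum.cong refl) (auto simp: mult.commute)

subsection \<open>Powers and the cone\<close>

primrec mpow :: "nat \<Rightarrow> (nat\<Rightarrow>nat\<Rightarrow>real) \<Rightarrow> nat \<Rightarrow> (nat\<Rightarrow>nat\<Rightarrow>real)" where
  "mpow n B 0 = idm n"
| "mpow n B (Suc l) = mat_mult n B (mpow n B l)"

inductive_set pc :: "nat \<Rightarrow> (nat\<Rightarrow>nat\<Rightarrow>real) \<Rightarrow> (nat\<Rightarrow>nat\<Rightarrow>real) set" for n B where
  pc_pow: "mpow n B l \<in> pc n B"
| pc_scale: "A \<in> pc n B \<Longrightarrow> 0 \<le> r \<Longrightarrow> (\<lambda>i j. r * A i j) \<in> pc n B"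
| pc_add: "A \<in> pc n B \<Longrightarrow> A' \<in> pc n B \<Longrightarrow> (\<lambda>i j. A i j + A' i j) \<in> pc n B"

context
  fixes n :: nat and B :: "nat\<Rightarrow>nat\<Rightarrow>real"
  assumes zoB: "zo n B" and symB: "symn n B" and psdB: "\<And>z. 0 \<le> bil n B z z"
begin

lemma zo_mpow: "zo n (mpow n B l)"
  by (induction l) (auto simp: zo_idm zoB zo_mm)

lemma mpow_add: "mat_mult n (mpow n B i) (mpow n B j) = mpow n B (i + j)"
  by (induction i) (auto simp: mm_idm_left zo_mpow mm_assoc)

lemma mpow_1: "mpow n B 1 = B"
  using mm_idm_right[OF zoB] by simp

lemma symn_mpow: "symn n (mpow n B l)"
proof (induction l)
  case 0 show ?case by (simp add: symn_idm)
next
  case (Suc l)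
  have e: "mat_mult n (mpow n B l) B = mpow n B (Suc l)"
    using mpow_add[of l 1] mpow_1 by simp
  show ?case unfolding symn_def
  proof (intro allI impI)
    fix i j assume ij: "i < n" "j < n"
    have "mpow n B (Suc l) i j = mat_mult n (mpow n B l) B i j" using e by simp
    also have "\<dots> = mat_mult n B (mpow n B l) j i"
      using symn_mm_swap[OF symB Suc.IH ij] by simp
    also have "\<dots> = mpow n B (Suc l) j i" by simp
    finally show "mpow n B (Suc l) i j = mpow n B (Suc l) j i" .
  qed
qed

lemma pc_zo: "A \<in> pc n B \<Longrightarrow> zo n A"
  by (induction rule: pc.induct) (auto simp: zo_mpow zo_add zo_scale)

lemma pc_symn: "A \<in> pc n B \<Longrightarrow> symn n A"
  by (induction rule: pc.induct) (auto simp: symn_mpow symn_add symn_scale)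

lemma pc_mult_pow: "A' \<in> pc n B \<Longrightarrow> mat_mult n (mpow n B l) A' \<in> pc n B"
  by (induction rule: pc.induct)
     (auto simp: mpow_add mm_scale_right mm_add_right intro: pc.intros)

lemma pc_mult: "A \<in> pc n B \<Longrightarrow> A' \<in> pc n B \<Longrightarrow> mat_mult n A A' \<in> pc n B"
  by (induction rule: pc.induct)
     (auto simp: pc_mult_pow mm_scale_left mm_add_left intro: pc.intros)

lemma pc_comm_pow: "A' \<in> pc n B \<Longrightarrow> mat_mult n (mpow n B l) A' = mat_mult n A' (mpow n B l)"
  by (induction rule: pc.induct)
     (auto simp: mpow_add mm_scale_right mm_add_right mm_scale_left mm_add_left add.commute)

lemma pc_comm: "A \<in> pc n B \<Longrightarrow> A' \<in> pc n B \<Longrightarrow> mat_mult n A A' = mat_mult n A' A"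
  by (induction rule: pc.induct)
     (auto simp: pc_comm_pow mm_scale_right mm_add_right mm_scale_left mm_add_left)

lemma mpow_psd: "0 \<le> bil n (mpow n B l) z z"
proof -
  obtain j r where l: "l = 2*j + r" and r: "r = 0 \<or> r = 1"
    by (metis odd_two_times_div_two_succ dvd_mult_div_cancel add_0_right even_iff_mod_2_eq_zero mod2_eq_if)
  have "mpow n B l = mat_mult n (mpow n B j) (mat_mult n (mpow n B r) (mpow n B j))"
    using l by (simp add: mpow_add add_ac mult_2)
  hence "bil n (mpow n B l) z z = bil n (mpow n B r) (mv n (mpow n B j) z) (mv n (mpow n B j) z)"
    using bil_sandwich[OF symn_mpow] by simp
  also have "0 \<le> \<dots>"
    using r psdB mpow_1 by (auto simp: bil_idm_nrm nrm_nonneg)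
  finally show ?thesis .
qed

lemma pc_psd: "A \<in> pc n B \<Longrightarrow> 0 \<le> bil n A z z"
  by (induction rule: pc.induct) (auto simp: mpow_psd bil_madd bil_mscale)

end


subsection \<open>Heron iteration and existence of the square root\<close>

lemma psd_iff: "psd n A \<longleftrightarrow> symn n A \<and> (\<forall>x. 0 \<le> bil n A x x)"
  unfolding psd_def symn_def bil_def by auto

primrec heron :: "nat \<Rightarrow> (nat\<Rightarrow>nat\<Rightarrow>real) \<Rightarrow> nat \<Rightarrow> (nat\<Rightarrow>nat\<Rightarrow>real)" where
  "heron n B 0 = (\<lambda>i j. 0)"
| "heron n B (Suc k) = (\<lambda>i j. (1/2) * (B i j + mat_mult n (heron n B k) (heron n B k) i j))"

lemma sum_delta_mult: "(j::nat) < n \<Longrightarrow> (\<Sum>b<n. f b * (if b = j then 1 else 0)) = (f j::real)"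
  by (subst sum.cong[OF refl, of _ _ "\<lambda>b. if b = j then f j else 0"]) auto

lemma half_sum_le: "(a::real) \<le> N \<Longrightarrow> b \<le> N \<Longrightarrow> (1/2) * (a + b) \<le> N"
  by (simp add: field_simps)

definition ev :: "nat \<Rightarrow> nat \<Rightarrow> real" where "ev i = (\<lambda>l. if l = i then 1 else 0)"

lemma bil_ev: "i < n \<Longrightarrow> j < n \<Longrightarrow> bil n A (ev i) (ev j) = A i j"
proof -
  assume ij: "i < n" "j < n"
  have "bil n A (ev i) (ev j) = (\<Sum>a<n. if a = i then (\<Sum>b<n. if b = j then A i j else 0) else 0)"
    unfolding bil_def by (intro sum.cong refl) (auto simp: ev_def sum_delta_mult)
  thus ?thesis using ij by simp
qed

lemma entry_polar:
  assumes "symn n A" "i < n" "j < n"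
  shows "A i j = (bil n A (\<lambda>l. ev i l + ev j l) (\<lambda>l. ev i l + ev j l)
                 - bil n A (\<lambda>l. ev i l - ev j l) (\<lambda>l. ev i l - ev j l)) / 4"
  using bil_ev[OF assms(2,3), of A] bil_ev[OF assms(3,2), of A] assms(1)
  unfolding symn_def
  by (simp add: bil_add1 bil_add2 bil_diff1 bil_diff2 assms)

lemma bil_le_abs: "bil n A z z \<le> (\<Sum>i<n. \<Sum>j<n. \<bar>A i j\<bar>) * nrm n z"
proof -
  have xi: "(z i)^2 \<le> nrm n z" if "i < n" for i
    unfolding nrm_def using that by (intro member_le_sum) auto
  have "bil n A z z \<le> (\<Sum>i<n. \<Sum>j<n. \<bar>A i j\<bar> * nrm n z)"
    unfolding bil_def
  proof (intro sum_mono)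
    fix i j assume "i \<in> {..<n}" "j \<in> {..<n}"
    hence "(z i)^2 \<le> nrm n z" "(z j)^2 \<le> nrm n z" using xi by auto
    hence h1: "((z i)^2 + (z j)^2)/2 \<le> nrm n z" by (simp add: field_simps)
    have h2: "\<bar>z i\<bar> * \<bar>z j\<bar> \<le> ((z i)^2 + (z j)^2)/2"
      using sum_squares_bound[of "\<bar>z i\<bar>" "\<bar>z j\<bar>"] by (simp add: power2_eq_square)
    have "\<bar>z i\<bar> * \<bar>z j\<bar> \<le> nrm n z" using h2 h1 by (rule order_trans)
    hence "\<bar>A i j\<bar> * (\<bar>z i\<bar> * \<bar>z j\<bar>) \<le> \<bar>A i j\<bar> * nrm n z" by (intro mult_left_mono) auto
    moreover have "z i * A i j * z j \<le> \<bar>A i j\<bar> * (\<bar>z i\<bar> * \<bar>z j\<bar>)"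
      by (metis abs_ge_self abs_mult mult.commute mult.left_commute)
    ultimately show "z i * A i j * z j \<le> \<bar>A i j\<bar> * nrm n z" by linarith
  qed
  also have "\<dots> = (\<Sum>i<n. \<Sum>j<n. \<bar>A i j\<bar>) * nrm n z" by (simp add: sum_distrib_right)
  finally show ?thesis .
qed

context
  fixes n :: nat and B :: "nat\<Rightarrow>nat\<Rightarrow>real"
  assumes zoB: "zo n B" and symB: "symn n B" and psdB: "\<And>z. 0 \<le> bil n B z z"
    and leB: "\<And>z. bil n B z z \<le> nrm n z"
begin

lemma B_pc: "B \<in> pc n B"
  using pc_pow[of n B 1] mpow_1[OF zoB symB psdB] by simp

lemma heron_pc: "heron n B k \<in> pc n B"
proof (induction k)
  case 0
  have "(\<lambda>i j. 0 * mpow n B 0 i j) \<in> pc n B" by (intro pc_scale pc_pow) auto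
  thus ?case by simp
next
  case (Suc k)
  have "mat_mult n (heron n B k) (heron n B k) \<in> pc n B"
    by (intro pc_mult[OF zoB symB psdB] Suc)
  hence "(\<lambda>i j. (1/2) * (B i j + mat_mult n (heron n B k) (heron n B k) i j)) \<in> pc n B"
    by (intro pc_scale pc_add B_pc) auto
  thus ?case by simp
qed

lemma heron_diff_pc: "(\<lambda>i j. heron n B (Suc k) i j - heron n B k i j) \<in> pc n B"
proof (induction k)
  case 0
  have "(\<lambda>i j. (1/2) * B i j) \<in> pc n B" by (intro pc_scale B_pc) auto
  thus ?case by (simp add: mat_mult_def)
next
  case (Suc k)
  let ?T1 = "heron n B (Suc k)" and ?T0 = "heron n B k"
  have c: "mat_mult n ?T1 ?T0 = mat_mult n ?T0 ?T1"
    by (intro pc_comm[OF zoB symB psdB] heron_pc)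
  have "mat_mult n (\<lambda>i j. ?T1 i j - ?T0 i j) (\<lambda>i j. ?T1 i j + ?T0 i j) \<in> pc n B"
    by (intro pc_mult[OF zoB symB psdB] Suc pc_add heron_pc)
  hence "(\<lambda>i j. (1/2) * mat_mult n (\<lambda>i j. ?T1 i j - ?T0 i j) (\<lambda>i j. ?T1 i j + ?T0 i j) i j) \<in> pc n B"
    by (intro pc_scale) auto
  also have "(\<lambda>i j. (1/2) * mat_mult n (\<lambda>i j. ?T1 i j - ?T0 i j) (\<lambda>i j. ?T1 i j + ?T0 i j) i j)
      = (\<lambda>i j. heron n B (Suc (Suc k)) i j - heron n B (Suc k) i j)"
  proof (intro ext)
    fix i j
    have cc: "mat_mult n ?T1 ?T0 i j = mat_mult n ?T0 ?T1 i j" using c by simp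
    show "(1/2) * mat_mult n (\<lambda>i j. ?T1 i j - ?T0 i j) (\<lambda>i j. ?T1 i j + ?T0 i j) i j
      = heron n B (Suc (Suc k)) i j - heron n B (Suc k) i j"
      unfolding heron.simps(2)[of n B "Suc k"] mm_diff_left mm_add_right
      apply (subst (3) heron.simps(2)[of n B k])
      using cc by (simp add: algebra_simps)
  qed
  finally show ?case .
qed

lemma heron_symn: "symn n (heron n B k)"
  by (rule pc_symn[OF zoB symB psdB heron_pc])

lemma heron_zo: "zo n (heron n B k)"
  by (rule pc_zo[OF zoB symB psdB heron_pc])

lemma heron_psd: "0 \<le> bil n (heron n B k) z z"
  by (rule pc_psd[OF zoB symB psdB heron_pc])

lemma heron_le: "bil n (heron n B k) z z \<le> nrm n z"
proof (induction k arbitrary: z)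
  case 0 show ?case by (simp add: bil_def nrm_nonneg)
next
  case (Suc k)
  let ?T = "heron n B k"
  have "bil n (mat_mult n ?T ?T) z z = (\<Sum>i<n. mv n ?T z i * mv n ?T z i)"
    by (simp add: bil_mm bil_mv_left[OF heron_symn])
  also have "\<dots> = nrm n (mv n ?T z)" by (simp add: nrm_def power2_eq_square)
  also have "\<dots> \<le> nrm n z" by (rule contraction[OF heron_symn heron_psd Suc.IH])
  finally have 1: "bil n (mat_mult n ?T ?T) z z \<le> nrm n z" .
  have "bil n (heron n B (Suc k)) z z = (1/2) * (bil n B z z + bil n (mat_mult n ?T ?T) z z)"
    unfolding heron.simps(2)[of n B k] bil_mscale bil_madd ..
  thus ?case using half_sum_le[OF leB[of z] 1] by (simp only:)
qed

lemma heron_mono: "bil n (heron n B k) z z \<le> bil n (heron n B (Suc k)) z z"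
  using pc_psd[OF zoB symB psdB heron_diff_pc[of k], of z] unfolding bil_mdiff by (simp del: heron.simps)

lemma heron_qf_conv: "convergent (\<lambda>k. bil n (heron n B k) z z)"
proof -
  have "incseq (\<lambda>k. bil n (heron n B k) z z)" by (rule incseq_SucI) (rule heron_mono)
  moreover have "bdd_above (range (\<lambda>k. bil n (heron n B k) z z))"
    using heron_le by (intro bdd_aboveI2) 
  ultimately show ?thesis by (intro convergentI[OF LIMSEQ_incseq_SUP])
qed

lemma heron_entry_conv:
  assumes ij: "i < n" "j < n"
  shows "convergent (\<lambda>k. heron n B k i j)"
proof -
  define f where "f = (\<lambda>k. bil n (heron n B k) (\<lambda>l. ev i l + ev j l) (\<lambda>l. ev i l + ev j l))"
  define g where "g = (\<lambda>k. bil n (heron n B k) (\<lambda>l. ev i l - ev j l) (\<lambda>l. ev i l - ev j l))"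
  have e: "heron n B k i j = (f k - g k) / 4" for k
    unfolding f_def g_def using heron_symn ij(1) ij(2) by (rule entry_polar)
  have a: "f \<longlonglongrightarrow> lim f" unfolding f_def by (rule convergent_LIMSEQ_iff[THEN iffD1, OF heron_qf_conv])
  have b: "g \<longlonglongrightarrow> lim g" unfolding g_def by (rule convergent_LIMSEQ_iff[THEN iffD1, OF heron_qf_conv])
  have t: "(\<lambda>k. (f k - g k) / 4) \<longlonglongrightarrow> (lim f - lim g) / 4"
    by (rule tendsto_divide[OF tendsto_diff[OF a b] tendsto_const]) simp
  have "(\<lambda>k. heron n B k i j) = (\<lambda>k. (f k - g k) / 4)" by (rule ext) (rule e)
  with t have "(\<lambda>k. heron n B k i j) \<longlonglongrightarrow> (lim f - lim g) / 4" by (simp only:)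
  thus ?thesis by (rule convergentI)
qed

definition hlim :: "nat\<Rightarrow>nat\<Rightarrow>real" where
  "hlim = (\<lambda>i j. if i < n \<and> j < n then lim (\<lambda>k. heron n B k i j) else 0)"

lemma hlim_tendsto: "i < n \<Longrightarrow> j < n \<Longrightarrow> (\<lambda>k. heron n B k i j) \<longlonglongrightarrow> hlim i j"
  using heron_entry_conv by (simp add: hlim_def convergent_LIMSEQ_iff)

lemma hlim_zo: "zo n hlim" by (simp add: zo_def hlim_def)

lemma hlim_symn: "symn n hlim"
  unfolding symn_def hlim_def using heron_symn unfolding symn_def by auto

lemma hlim_bil_tendsto: "(\<lambda>k. bil n (heron n B k) z z) \<longlonglongrightarrow> bil n hlim z z"
  unfolding bil_def by (intro tendsto_intros hlim_tendsto) auto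

lemma hlim_le: "bil n hlim z z \<le> nrm n z"
  by (rule LIMSEQ_le_const2[OF hlim_bil_tendsto]) (auto intro: heron_le)

lemma hlim_fix: "i < n \<Longrightarrow> j < n \<Longrightarrow> hlim i j = (1/2) * (B i j + mat_mult n hlim hlim i j)"
proof -
  assume ij: "i < n" "j < n"
  have "(\<lambda>k. heron n B (Suc k) i j) \<longlonglongrightarrow> hlim i j"
    using hlim_tendsto[OF ij] by (rule LIMSEQ_Suc)
  moreover have "(\<lambda>k. heron n B (Suc k) i j) \<longlonglongrightarrow> (1/2) * (B i j + mat_mult n hlim hlim i j)"
    unfolding heron.simps mat_mult_def using ij
    by (intro tendsto_intros hlim_tendsto) auto
  ultimately show ?thesis by (rule LIMSEQ_unique)
qed

end

theorem psd_sqrt_exists: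
  assumes "psd n \<rho>"
  shows "\<exists>S. psd n S \<and> (\<forall>i<n. \<forall>j<n. mat_mult n S S i j = \<rho> i j) \<and> zo n S"
proof -
  have sr: "symn n \<rho>" and pr: "\<And>x. 0 \<le> bil n \<rho> x x" using assms by (auto simp: psd_iff)
  define c where "c = 1 + (\<Sum>i<n. \<Sum>j<n. \<bar>\<rho> i j\<bar>)"
  have c1: "1 \<le> c" unfolding c_def by (simp add: sum_nonneg)
  define R where "R = (\<lambda>i j. if i < n \<and> j < n then \<rho> i j else 0)"
  define B where "B = (\<lambda>i j. idm n i j - (1/c) * R i j)"
  have zoR: "zo n R" by (simp add: zo_def R_def)
  have symR: "symn n R" using sr by (simp add: symn_def R_def)
  have bR: "bil n R z z = bil n \<rho> z z" for z unfolding bil_def R_def by simp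
  have zoB: "zo n B" unfolding B_def by (intro zo_diff zo_idm zo_scale zoR)
  have symB: "symn n B" unfolding B_def by (intro symn_diff symn_idm symn_scale symR)
  have bB: "bil n B z z = nrm n z - (1/c) * bil n \<rho> z z" for z
    unfolding B_def bil_mdiff bil_mscale bil_idm_nrm bR ..
  have psdB: "0 \<le> bil n B z z" for z
  proof -
    have "bil n \<rho> z z \<le> (c - 1) * nrm n z" using bil_le_abs[of n \<rho> z] by (simp add: c_def)
    hence "(1/c) * bil n \<rho> z z \<le> (1/c) * ((c - 1) * nrm n z)" using c1 by (intro mult_left_mono) auto
    also have "\<dots> \<le> nrm n z" using c1 nrm_nonneg[of n z] by (simp add: field_simps)
    finally show ?thesis using bB by simp
  qed
  have leB: "bil n B z z \<le> nrm n z" for z using bB pr[of z] c1 by simp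
  define L where "L = hlim n B"
  note Lfix = hlim_fix[OF zoB symB psdB leB, folded L_def]
  note Lzo = hlim_zo[OF zoB symB psdB leB, folded L_def]
  note Lsym = hlim_symn[OF zoB symB psdB leB, folded L_def]
  note Lle = hlim_le[OF zoB symB psdB leB, folded L_def]
  define S where "S = (\<lambda>i j. sqrt c * (idm n i j - L i j))"
  have zoS: "zo n S" unfolding S_def by (intro zo_scale zo_diff zo_idm Lzo)
  have symS: "symn n S" unfolding S_def by (intro symn_scale symn_diff symn_idm Lsym)
  have psdS: "0 \<le> bil n S z z" for z
    unfolding S_def using Lle[of z] c1 by (simp add: bil_mscale bil_mdiff bil_idm_nrm)
  have MM: "mat_mult n (\<lambda>i j. idm n i j - L i j) (\<lambda>i j. idm n i j - L i j)
      = (\<lambda>i j. idm n i j - L i j - L i j + mat_mult n L L i j)"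
    unfolding mm_diff_left mm_diff_right mm_idm_left[OF zo_idm] mm_idm_left[OF Lzo] mm_idm_right[OF Lzo]
    by (simp add: fun_eq_iff)
  have "mat_mult n S S i j = \<rho> i j" if ij: "i < n" "j < n" for i j
  proof -
    have "mat_mult n S S i j = c * mat_mult n (\<lambda>i j. idm n i j - L i j) (\<lambda>i j. idm n i j - L i j) i j"
      unfolding S_def mm_scale_left mm_scale_right using c1 by simp
    also have "\<dots> = c * (idm n i j - B i j)" unfolding MM using Lfix[OF ij] by simp
    also have "\<dots> = \<rho> i j" using ij c1 by (simp add: B_def R_def)
    finally show ?thesis .
  qed
  hence "psd n S \<and> (\<forall>i<n. \<forall>j<n. mat_mult n S S i j = \<rho> i j) \<and> zo n S"
    using zoS symS psdS unfolding psd_iff by blast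
  thus ?thesis by blast
qed


subsection \<open>Uniqueness of the square root\<close>

lemma trace_form:
  assumes "symn n D"
  shows "(\<Sum>i<n. \<Sum>j<n. D i j * mat_mult n A D j i) = (\<Sum>i<n. bil n A (\<lambda>l. D i l) (\<lambda>l. D i l))"
proof (intro sum.cong refl)
  fix i assume i: "i \<in> {..<n}"
  have "(\<Sum>j<n. D i j * mat_mult n A D j i) = (\<Sum>j<n. \<Sum>k<n. D i j * A j k * D i k)"
    unfolding mat_mult_def sum_distrib_left
    using assms i unfolding symn_def by (intro sum.cong refl) (auto simp: mult.assoc)
  thus "(\<Sum>j<n. D i j * mat_mult n A D j i) = bil n A (\<lambda>l. D i l) (\<lambda>l. D i l)"
    by (simp add: bil_def)
qed

theorem psd_sqrt_unique:
  assumes pS: "psd n S" and pT: "psd n T" and zS: "zo n S" and zT: "zo n T"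
    and eq: "\<forall>i<n. \<forall>j<n. mat_mult n S S i j = mat_mult n T T i j"
  shows "S = T"
proof -
  have sS: "symn n S" and qS: "\<And>x. 0 \<le> bil n S x x" using pS by (auto simp: psd_iff)
  have sT: "symn n T" and qT: "\<And>x. 0 \<le> bil n T x x" using pT by (auto simp: psd_iff)
  define D where "D = (\<lambda>i j. S i j - T i j)"
  have sD: "symn n D" unfolding D_def by (intro symn_diff sS sT)
  have zD: "zo n D" unfolding D_def by (intro zo_diff zS zT)
  have W0: "mat_mult n S D j i + mat_mult n D T j i = 0" if "i < n" "j < n" for i j
    using eq that unfolding D_def mm_diff_left mm_diff_right by simp
  have "(\<Sum>i<n. \<Sum>j<n. D i j * (mat_mult n S D j i + mat_mult n D T j i)) = 0"
    using W0 by simp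
  hence "(\<Sum>i<n. \<Sum>j<n. D i j * mat_mult n S D j i) + (\<Sum>i<n. \<Sum>j<n. D i j * mat_mult n D T j i) = 0"
    by (simp add: distrib_left sum.distrib)
  moreover have "(\<Sum>i<n. \<Sum>j<n. D i j * mat_mult n D T j i) = (\<Sum>i<n. bil n T (\<lambda>l. D i l) (\<lambda>l. D i l))"
  proof -
    have "(\<Sum>i<n. \<Sum>j<n. D i j * mat_mult n D T j i) = (\<Sum>i<n. \<Sum>j<n. D j i * mat_mult n T D i j)"
    proof (intro sum.cong refl)
      fix i j assume ij: "i \<in> {..<n}" "j \<in> {..<n}"
      have "D i j = D j i" using sD ij unfolding symn_def by auto
      moreover have "mat_mult n D T j i = mat_mult n T D i j" using symn_mm_swap[OF sD sT] ij by auto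
      ultimately show "D i j * mat_mult n D T j i = D j i * mat_mult n T D i j" by (simp only:)
    qed
    also have "\<dots> = (\<Sum>j<n. \<Sum>i<n. D j i * mat_mult n T D i j)" by (rule sum.swap)
    also have "\<dots> = (\<Sum>i<n. bil n T (\<lambda>l. D i l) (\<lambda>l. D i l))" by (rule trace_form[OF sD])
    finally show ?thesis .
  qed
  ultimately have tot: "(\<Sum>i<n. bil n S (\<lambda>l. D i l) (\<lambda>l. D i l)) + (\<Sum>i<n. bil n T (\<lambda>l. D i l) (\<lambda>l. D i l)) = 0"
    using trace_form[OF sD, of S] by simp
  have n1: "0 \<le> (\<Sum>i<n. bil n S (\<lambda>l. D i l) (\<lambda>l. D i l))" using qS by (simp add: sum_nonneg)
  have n2: "0 \<le> (\<Sum>i<n. bil n T (\<lambda>l. D i l) (\<lambda>l. D i l))" using qT by (simp add: sum_nonneg)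
  have s1: "(\<Sum>i<n. bil n S (\<lambda>l. D i l) (\<lambda>l. D i l)) = 0" using tot n1 n2 by linarith
  have s2: "(\<Sum>i<n. bil n T (\<lambda>l. D i l) (\<lambda>l. D i l)) = 0" using tot n1 n2 by linarith
  have z1: "bil n S (\<lambda>l. D i l) (\<lambda>l. D i l) = 0" if "i < n" for i
    using s1 sum_nonneg_eq_0_iff[of "{..<n}" "\<lambda>i. bil n S (\<lambda>l. D i l) (\<lambda>l. D i l)"] qS that by simp
  have z2: "bil n T (\<lambda>l. D i l) (\<lambda>l. D i l) = 0" if "i < n" for i
    using s2 sum_nonneg_eq_0_iff[of "{..<n}" "\<lambda>i. bil n T (\<lambda>l. D i l) (\<lambda>l. D i l)"] qT that by simp
  have mSD: "mat_mult n S D l i = 0" if "l < n" "i < n" for l i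
  proof -
    have "mv n S (\<lambda>l. D i l) l = 0" by (rule psd_null_mv[OF sS qS z1[OF that(2)] that(1)])
    moreover have "mat_mult n S D l i = mv n S (\<lambda>l. D i l) l"
      unfolding mat_mult_def mv_def using sD that unfolding symn_def by (intro sum.cong refl) auto
    ultimately show ?thesis by simp
  qed
  have mTD: "mat_mult n T D l i = 0" if "l < n" "i < n" for l i
  proof -
    have "mv n T (\<lambda>l. D i l) l = 0" by (rule psd_null_mv[OF sT qT z2[OF that(2)] that(1)])
    moreover have "mat_mult n T D l i = mv n T (\<lambda>l. D i l) l"
      unfolding mat_mult_def mv_def using sD that unfolding symn_def by (intro sum.cong refl) auto
    ultimately show ?thesis by simp
  qed
  have "D i j = 0" if "i < n" "j < n" for i j
  proof -
    have "mat_mult n D D i i = mat_mult n S D i i - mat_mult n T D i i"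
      unfolding D_def mm_diff_left by (simp add: D_def[symmetric])
    hence "mat_mult n D D i i = 0" using mSD mTD that by simp
    moreover have "mat_mult n D D i i = (\<Sum>k<n. (D i k)^2)"
      unfolding mat_mult_def
    proof (intro sum.cong refl)
      fix k assume "k \<in> {..<n}"
      hence "D k i = D i k" using sD that unfolding symn_def by auto
      thus "D i k * D k i = (D i k)^2" by (simp add: power2_eq_square)
    qed
    ultimately have "(\<Sum>k<n. (D i k)^2) = 0" by simp
    hence "(D i j)^2 = 0" using that by (subst (asm) sum_nonneg_eq_0_iff) auto
    thus ?thesis by simp
  qed
  hence "\<forall>i j. D i j = 0" using zD unfolding zo_def by blast
  thus ?thesis unfolding D_def by (auto simp: fun_eq_iff)
qed

theorem mat_sqrt_props:
  assumes "psd n \<rho>"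
  shows "psd n (mat_sqrt n \<rho>) \<and> (\<forall>i<n. \<forall>j<n. mat_mult n (mat_sqrt n \<rho>) (mat_sqrt n \<rho>) i j = \<rho> i j)
         \<and> zo n (mat_sqrt n \<rho>)"
proof -
  let ?P = "\<lambda>S. psd n S \<and> (\<forall>i<n. \<forall>j<n. mat_mult n S S i j = \<rho> i j) \<and>
                      (\<forall>i j. \<not> (i < n \<and> j < n) \<longrightarrow> S i j = 0)"
  have ex: "\<exists>S. ?P S" using psd_sqrt_exists[OF assms] unfolding zo_def by blast
  have un: "S = T" if "?P S" "?P T" for S T
    using that by (intro psd_sqrt_unique) (auto simp: zo_def)
  have "\<exists>!S. ?P S" using ex un by (rule ex_ex1I)
  hence "?P (THE S. ?P S)" by (rule theI')
  thus ?thesis unfolding mat_sqrt_def zo_def by blast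
qed


definition lin :: "nat \<Rightarrow> (nat\<Rightarrow>real) \<Rightarrow> (nat\<Rightarrow>real) \<Rightarrow> real" where
  "lin n a g = (\<Sum>k<n. a k * g k)"
definition ipr :: "nat \<Rightarrow> (nat\<Rightarrow>real) \<Rightarrow> (nat\<Rightarrow>real) \<Rightarrow> real" where
  "ipr n a b = (\<Sum>k<n. a k * b k)"

lemma gauss_prob: "prob_space (gauss_vec n)"
  unfolding gauss_vec_def by (intro prob_space_PiM prob_space_normal_density) simp

lemma comp_meas: "k < n \<Longrightarrow> (\<lambda>g. g k) \<in> borel_measurable (gauss_vec n)"
  unfolding gauss_vec_def by measurable

lemma lin_meas[measurable]: "lin n a \<in> borel_measurable (gauss_vec n)"
  unfolding lin_def by (intro borel_measurable_sum borel_measurable_times borel_measurable_const comp_meas) auto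

lemma sgn_pm_meas[measurable]: "sgn_pm \<in> borel_measurable borel"
  unfolding sgn_pm_def by measurable

lemma comp_dist: "k < n \<Longrightarrow> distributed (gauss_vec n) lborel (\<lambda>g. g k) std_normal_density"
proof -
  assume k: "k < n"
  have "distr (gauss_vec n) lborel (\<lambda>g. g k) = distr (gauss_vec n) (density lborel std_normal_density) (\<lambda>g. g k)"
    by (rule distr_cong) auto
  also have "\<dots> = density lborel std_normal_density"
    unfolding gauss_vec_def using k by (intro distr_PiM_component prob_space_normal_density) auto
  finally show ?thesis unfolding distributed_def using comp_meas[OF k] by auto
qed


interpretation G: prob_space "gauss_vec n" for n by (rule gauss_prob)

lemma comp_indep:
  assumes "0 < n"
  shows "G.indep_vars n (\<lambda>_. borel) (\<lambda>k g. g k) {..<n}"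
proof -
  have ne: "{..<n} \<noteq> {}" using assms by auto
  show ?thesis
  proof (subst G.indep_vars_iff_distr_eq_PiM'[OF ne])
    show "\<And>i. i \<in> {..<n} \<Longrightarrow> (\<lambda>g. g i) \<in> measurable (gauss_vec n) borel"
      using comp_meas by auto
    have "distr (gauss_vec n) (\<Pi>\<^sub>M i\<in>{..<n}. borel) (\<lambda>x. \<lambda>i\<in>{..<n}. x i)
        = distr (gauss_vec n) (\<Pi>\<^sub>M i\<in>{..<n}. borel) (\<lambda>x. x)"
      by (rule distr_cong) (simp_all add: gauss_vec_def space_PiM PiE_restrict)
    also have "\<dots> = gauss_vec n"
      unfolding gauss_vec_def by (rule distr_id2) (rule sets_PiM_cong, auto)
    also have "\<dots> = (\<Pi>\<^sub>M i\<in>{..<n}. distr (gauss_vec n) borel (\<lambda>x. x i))"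
    proof -
      have "distr (gauss_vec n) borel (\<lambda>x. x i) = density lborel std_normal_density" if "i \<in> {..<n}" for i
      proof -
        have "distr (gauss_vec n) borel (\<lambda>x. x i) = distr (gauss_vec n) lborel (\<lambda>x. x i)"
          by (rule distr_cong) simp_all
        also have "\<dots> = density lborel std_normal_density"
          using comp_dist[of i n] that unfolding distributed_def by simp
        finally show ?thesis .
      qed
      thus ?thesis unfolding gauss_vec_def by (intro PiM_cong) auto
    qed
    finally show "distr (gauss_vec n) (\<Pi>\<^sub>M i\<in>{..<n}. borel) (\<lambda>x. \<lambda>i\<in>{..<n}. x i)
        = (\<Pi>\<^sub>M i\<in>{..<n}. distr (gauss_vec n) borel (\<lambda>x. x i))" .
  qed
qed


lemma ipr_nonneg: "0 \<le> ipr n a a"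
  unfolding ipr_def by (intro sum_nonneg) auto

lemma ipr_zero: "ipr n a a = 0 \<Longrightarrow> k < n \<Longrightarrow> a k = 0"
  unfolding ipr_def by (subst (asm) sum_nonneg_eq_0_iff) auto

lemma lin_zero: "ipr n a a = 0 \<Longrightarrow> lin n a g = 0"
  unfolding lin_def using ipr_zero by (intro sum.neutral) auto

lemma lin_dist:
  assumes pos: "0 < ipr n a a"
  shows "distributed (gauss_vec n) lborel (lin n a) (normal_density 0 (sqrt (ipr n a a)))"
proof -
  define I where "I = {k. k < n \<and> a k \<noteq> 0}"
  have fin: "finite I" unfolding I_def by auto
  have ne: "I \<noteq> {}"
  proof
    assume "I = {}"
    hence "ipr n a a = 0" unfolding ipr_def I_def by (intro sum.neutral) auto
    thus False using pos by simp
  qed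
  hence n0: "0 < n" unfolding I_def by auto
  have sub: "I \<subseteq> {..<n}" unfolding I_def by auto
  have ind: "G.indep_vars n (\<lambda>_. borel) (\<lambda>k g. a k * g k) I"
    by (rule G.indep_vars_compose2[OF G.indep_vars_subset[OF comp_indep[OF n0] sub]]) simp
  have dk: "distributed (gauss_vec n) lborel (\<lambda>g. a k * g k) (normal_density 0 \<bar>a k\<bar>)" if "k \<in> I" for k
  proof -
    have "k < n" "a k \<noteq> 0" using that unfolding I_def by auto
    from G.normal_density_affine[OF comp_dist[OF this(1)] _ this(2), of 0]
    show ?thesis by simp
  qed
  have pk: "0 < \<bar>a k\<bar>" if "k \<in> I" for k using that unfolding I_def by auto
  have D: "distributed (gauss_vec n) lborel (\<lambda>g. \<Sum>k\<in>I. a k * g k)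
            (normal_density (\<Sum>k\<in>I. 0) (sqrt (\<Sum>k\<in>I. \<bar>a k\<bar>^2)))"
    by (rule G.sum_indep_normal[OF fin ne ind pk dk])
  have e1: "(\<lambda>g. \<Sum>k\<in>I. a k * g k) = lin n a"
    unfolding lin_def by (intro ext sum.mono_neutral_left) (auto simp: I_def)
  have e2: "(\<Sum>k\<in>I. \<bar>a k\<bar>^2) = ipr n a a"
    unfolding ipr_def by (intro sum.mono_neutral_cong_left) (auto simp: I_def power2_eq_square)
  show ?thesis using D unfolding e1 e2 by simp
qed

lemma lin_sq:
  "integrable (gauss_vec n) (\<lambda>g. (lin n a g)^2) \<and> (\<integral>g. (lin n a g)^2 \<partial>gauss_vec n) = ipr n a a"
proof (cases "ipr n a a = 0")
  case True
  thus ?thesis using lin_zero[OF True] by simp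
next
  case False
  hence pos: "0 < ipr n a a" using ipr_nonneg[of n a] by simp
  let ?s = "sqrt (ipr n a a)"
  have sp: "0 < ?s" using pos by simp
  note D = lin_dist[OF pos]
  have "integrable lborel (\<lambda>x. normal_density 0 ?s x * x^2)"
    using integrable_normal_moment[OF sp, of 0 2] by simp
  hence i: "integrable (gauss_vec n) (\<lambda>g. (lin n a g)^2)"
    using distributed_integrable[OF D, of "\<lambda>x. x^2"] by simp
  have "(\<integral>g. (lin n a g)^2 \<partial>gauss_vec n) = (\<integral>x. normal_density 0 ?s x * x^2 \<partial>lborel)"
    using distributed_integral[OF D, of "\<lambda>x. x^2"] by simp
  also have "\<dots> = fact 2 / ((2 / ?s^2) ^ 1 * fact 1)"
    using integral_normal_moment_even[OF sp, of 0 1] by simp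
  also have "\<dots> = ?s^2" using sp by (simp add: fact_numeral)
  also have "\<dots> = ipr n a a" using pos by simp
  finally show ?thesis using i by simp
qed

lemma lin_abs:
  "integrable (gauss_vec n) (\<lambda>g. \<bar>lin n a g\<bar>) \<and>
   (\<integral>g. \<bar>lin n a g\<bar> \<partial>gauss_vec n) = sqrt (2/pi) * sqrt (ipr n a a)"
proof (cases "ipr n a a = 0")
  case True
  thus ?thesis using lin_zero[OF True] by simp
next
  case False
  hence pos: "0 < ipr n a a" using ipr_nonneg[of n a] by simp
  let ?s = "sqrt (ipr n a a)"
  have sp: "0 < ?s" using pos by simp
  note D = lin_dist[OF pos]
  have "integrable lborel (\<lambda>x. normal_density 0 ?s x * \<bar>x\<bar>)"
    using integrable_normal_moment_abs[OF sp, of 0 1] by simp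
  hence i: "integrable (gauss_vec n) (\<lambda>g. \<bar>lin n a g\<bar>)"
    using distributed_integrable[OF D, of "\<lambda>x. \<bar>x\<bar>"] by simp
  have "(\<integral>g. \<bar>lin n a g\<bar> \<partial>gauss_vec n) = (\<integral>x. normal_density 0 ?s x * \<bar>x\<bar> \<partial>lborel)"
    using distributed_integral[OF D, of "\<lambda>x. \<bar>x\<bar>"] by simp
  also have "\<dots> = sqrt (2/pi) * ?s"
    using integral_normal_moment_abs_odd[OF sp, of 0 0] by simp
  finally show ?thesis using i by simp
qed


lemma lin_add: "lin n (\<lambda>k. a k + b k) g = lin n a g + lin n b g"
  unfolding lin_def by (simp add: algebra_simps sum.distrib)
lemma lin_diff: "lin n (\<lambda>k. a k - b k) g = lin n a g - lin n b g"
  unfolding lin_def by (simp add: algebra_simps sum_subtractf)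
lemma lin_scale: "lin n (\<lambda>k. t * a k) g = t * lin n a g"
  unfolding lin_def by (simp add: sum_distrib_left algebra_simps)

lemma ipr_sym: "ipr n a b = ipr n b a"
  unfolding ipr_def by (simp add: mult.commute)

lemma ipr_polar: "ipr n (\<lambda>k. a k + b k) (\<lambda>k. a k + b k) - ipr n (\<lambda>k. a k - b k) (\<lambda>k. a k - b k) = 4 * ipr n a b"
  unfolding ipr_def by (simp add: algebra_simps sum.distrib sum_subtractf sum_distrib_left)

lemma lin_prod:
  "integrable (gauss_vec n) (\<lambda>g. lin n a g * lin n b g) \<and>
   (\<integral>g. lin n a g * lin n b g \<partial>gauss_vec n) = ipr n a b"
proof -
  let ?p = "\<lambda>k. a k + b k" and ?m = "\<lambda>k. a k - b k"
  have e: "lin n a g * lin n b g = (1/4) * ((lin n ?p g)^2 - (lin n ?m g)^2)" for g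
    unfolding lin_add lin_diff by (simp add: power2_eq_square algebra_simps)
  have ip: "integrable (gauss_vec n) (\<lambda>g. (lin n ?p g)^2)" and vp: "(\<integral>g. (lin n ?p g)^2 \<partial>gauss_vec n) = ipr n ?p ?p"
    using lin_sq[of n ?p] by auto
  have im: "integrable (gauss_vec n) (\<lambda>g. (lin n ?m g)^2)" and vm: "(\<integral>g. (lin n ?m g)^2 \<partial>gauss_vec n) = ipr n ?m ?m"
    using lin_sq[of n ?m] by auto
  have "integrable (gauss_vec n) (\<lambda>g. (1/4) * ((lin n ?p g)^2 - (lin n ?m g)^2))"
    using ip im by auto
  moreover have "(\<integral>g. (1/4) * ((lin n ?p g)^2 - (lin n ?m g)^2) \<partial>gauss_vec n) = ipr n a b"
    using ip im vp vm ipr_polar[of n a b] by simp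
  ultimately show ?thesis unfolding e by simp
qed

lemma small_le:
  fixes F A K d :: real
  assumes d: "0 < d" and K: "0 \<le> K" and H: "\<And>t. 0 < t \<Longrightarrow> t \<le> d \<Longrightarrow> F \<le> A + t * K"
  shows "F \<le> A"
proof (rule ccontr)
  assume "\<not> F \<le> A"
  hence pos: "0 < F - A" by simp
  define t where "t = min d ((F - A) / (2 * (K + 1)))"
  have t0: "0 < t" unfolding t_def using d pos K by simp
  have t1: "t \<le> (F - A) / (2 * (K + 1))" unfolding t_def by simp
  have "t * K \<le> (F - A) / (2 * (K + 1)) * K" using t1 K by (rule mult_right_mono)
  also have "\<dots> = (F - A) * (K / (2 * (K + 1)))" by simp
  also have "\<dots> < (F - A) * 1"
  proof (rule mult_strict_left_mono[OF _ pos])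
    show "K / (2 * (K + 1)) < 1" using K by (simp add: divide_less_eq)
  qed
  also have "\<dots> = F - A" by simp
  finally have "A + t * K < F" by simp
  moreover have "F \<le> A + t * K" using H[OF t0] t_def by simp
  ultimately show False by simp
qed

lemma sqrt_bound:
  fixes t p q :: real
  assumes "0 \<le> 1 + t*p + t^2*q/2"
  shows "sqrt (1 + 2*t*p + t^2*q) \<le> 1 + t*p + t^2*q/2"
proof -
  have "1 + 2*t*p + t^2*q \<le> (1 + t*p + t^2*q/2)^2"
  proof -
    have "(1 + t*p + t^2*q/2)^2 = 1 + 2*t*p + t^2*q + (t*p + t^2*q/2)^2"
      by (simp add: power2_eq_square algebra_simps)
    thus ?thesis by simp
  qed
  hence "sqrt (1 + 2*t*p + t^2*q) \<le> sqrt ((1 + t*p + t^2*q/2)^2)" by (rule real_sqrt_le_mono)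
  thus ?thesis using assms by simp
qed

lemma deriv_trick:
  fixes c F p q :: real
  assumes c: "0 < c" and q: "0 \<le> q" and H: "\<And>t. c + t * F \<le> c * sqrt (1 + 2*t*p + t^2*q)"
  shows "F = c * p"
proof -
  define d where "d = 1 / (2 * (\<bar>p\<bar> + 1))"
  have d0: "0 < d" unfolding d_def by (simp add: add_pos_nonneg)
  have key: "t * F \<le> c * (t * p) + t^2 * (c * q / 2)" if "\<bar>t\<bar> \<le> d" for t
  proof -
    have "\<bar>t * p\<bar> = \<bar>t\<bar> * \<bar>p\<bar>" by (simp add: abs_mult)
    also have "\<dots> \<le> d * \<bar>p\<bar>" using that by (intro mult_right_mono) auto
    also have "d * \<bar>p\<bar> \<le> 1/2" unfolding d_def by (simp add: field_simps)
    finally have a1: "\<bar>t * p\<bar> \<le> 1/2" .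
    hence a2: "-(t*p) \<le> 1/2" by (simp only: abs_le_iff)
    have a3: "0 \<le> t^2 * q / 2" using q by simp
    have "0 \<le> 1 + t*p + t^2*q/2" using a2 a3 by linarith
    hence "sqrt (1 + 2*t*p + t^2*q) \<le> 1 + t*p + t^2*q/2" by (rule sqrt_bound)
    hence "c * sqrt (1 + 2*t*p + t^2*q) \<le> c * (1 + t*p + t^2*q/2)" using c by (simp add: mult_left_mono)
    with H[of t] have "c + t * F \<le> c * (1 + t*p + t^2*q/2)" by (rule order_trans)
    thus ?thesis by (simp add: algebra_simps)
  qed
  have K0: "0 \<le> c * q / 2" using c q by simp
  have up: "F \<le> c * p"
  proof (rule small_le[OF d0 K0])
    fix t :: real assume t: "0 < t" "t \<le> d"
    have "t * F \<le> c * (t * p) + t^2 * (c * q / 2)" using t by (intro key) simp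
    hence "t * F \<le> t * (c * p + t * (c * q / 2))" by (simp add: power2_eq_square algebra_simps)
    thus "F \<le> c * p + t * (c * q / 2)" by (rule mult_left_le_imp_le[OF _ t(1)])
  qed
  have lo: "- F \<le> - (c * p)"
  proof (rule small_le[OF d0 K0])
    fix t :: real assume t: "0 < t" "t \<le> d"
    have "(-t) * F \<le> c * ((-t) * p) + (-t)^2 * (c * q / 2)" using t by (intro key) simp
    hence "t * (-F) \<le> t * (- (c * p) + t * (c * q / 2))" by (simp add: power2_eq_square algebra_simps)
    thus "- F \<le> - (c * p) + t * (c * q / 2)" by (rule mult_left_le_imp_le[OF _ t(1)])
  qed
  show ?thesis using up lo by simp
qed

lemma abs_sgn_ineq: "\<bar>y\<bar> + t * (sgn_pm y * w) \<le> \<bar>y + t * w\<bar>"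
  unfolding sgn_pm_def by (cases "y < 0") (auto simp: algebra_simps abs_if split: if_splits)

lemma sgn_pm_abs: "\<bar>sgn_pm y\<bar> = 1" unfolding sgn_pm_def by simp

lemma lin_sgn_integrable:
  "integrable (gauss_vec n) (\<lambda>g. sgn_pm (lin n u g) * lin n v g)"
proof (rule Bochner_Integration.integrable_bound)
  show "integrable (gauss_vec n) (\<lambda>g. \<bar>lin n v g\<bar>)" using lin_abs by blast
  show "(\<lambda>g. sgn_pm (lin n u g) * lin n v g) \<in> borel_measurable (gauss_vec n)" by measurable
  show "AE g in gauss_vec n. norm (sgn_pm (lin n u g) * lin n v g) \<le> norm \<bar>lin n v g\<bar>"
    by (simp add: abs_mult sgn_pm_abs)
qed

lemma lin_sgn:
  assumes u1: "ipr n u u = 1"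
  shows "(\<integral>g. sgn_pm (lin n u g) * lin n v g \<partial>gauss_vec n) = sqrt (2/pi) * ipr n u v"
proof -
  define F where "F = (\<integral>g. sgn_pm (lin n u g) * lin n v g \<partial>gauss_vec n)"
  let ?c = "sqrt (2/pi)"
  have c0: "0 < ?c" by simp
  have H: "?c + t * F \<le> ?c * sqrt (1 + 2*t*ipr n u v + t^2*ipr n v v)" for t
  proof -
    let ?w = "\<lambda>k. u k + t * v k"
    have iu: "integrable (gauss_vec n) (\<lambda>g. \<bar>lin n u g\<bar>)"
      and eu: "(\<integral>g. \<bar>lin n u g\<bar> \<partial>gauss_vec n) = ?c" using lin_abs[of n u] u1 by auto
    have iw: "integrable (gauss_vec n) (\<lambda>g. \<bar>lin n ?w g\<bar>)"
      and ew: "(\<integral>g. \<bar>lin n ?w g\<bar> \<partial>gauss_vec n) = ?c * sqrt (ipr n ?w ?w)" using lin_abs[of n ?w] by auto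
    have isg: "integrable (gauss_vec n) (\<lambda>g. t * (sgn_pm (lin n u g) * lin n v g))"
      using lin_sgn_integrable by auto
    have "(\<integral>g. \<bar>lin n u g\<bar> + t * (sgn_pm (lin n u g) * lin n v g) \<partial>gauss_vec n)
        \<le> (\<integral>g. \<bar>lin n ?w g\<bar> \<partial>gauss_vec n)"
      using iu isg iw by (intro integral_mono) (auto simp: lin_add lin_scale abs_sgn_ineq)
    moreover have "(\<integral>g. \<bar>lin n u g\<bar> + t * (sgn_pm (lin n u g) * lin n v g) \<partial>gauss_vec n) = ?c + t * F"
      using iu isg eu unfolding F_def by simp
    moreover have "ipr n ?w ?w = 1 + 2*t*ipr n u v + t^2*ipr n v v"
      using u1 ipr_sym[of n u v] unfolding ipr_def
      by (simp add: algebra_simps sum.distrib sum_distrib_left power2_eq_square)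
    ultimately show ?thesis using ew by simp
  qed
  have "F = ?c * ipr n u v" by (rule deriv_trick[OF c0 ipr_nonneg H])
  thus ?thesis unfolding F_def .
qed


lemma nrm_L2: "sqrt (nrm n x) = L2_set x {..<n}"
  by (simp add: nrm_def L2_set_def)

lemma opnorm_mv:
  assumes "op_norm n A = 1"
  shows "nrm n (mv n A x) \<le> nrm n x"
proof (cases "nrm n x = 0")
  case True
  hence "x j = 0" if "j < n" for j
    using that unfolding nrm_def by (subst (asm) sum_nonneg_eq_0_iff) auto
  hence "mv n A x i = 0" for i unfolding mv_def by (intro sum.neutral) auto
  thus ?thesis using nrm_nonneg[of n x] by (simp add: nrm_def)
next
  case False
  let ?S = "{sqrt (\<Sum>i<n. (\<Sum>j<n. A i j * x j)\<^sup>2) | x :: nat \<Rightarrow> real. (\<Sum>j<n. (x j)\<^sup>2) \<le> 1}"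
  have bdd: "bdd_above ?S"
  proof (rule bdd_aboveI)
    fix y assume "y \<in> ?S"
    then obtain z where y: "y = sqrt (\<Sum>i<n. (\<Sum>j<n. A i j * z j)\<^sup>2)" and z: "(\<Sum>j<n. (z j)\<^sup>2) \<le> 1"
      by blast
    have zj: "\<bar>z j\<bar> \<le> 1" if "j < n" for j
    proof -
      have "(z j)^2 \<le> (\<Sum>j<n. (z j)\<^sup>2)" using that by (intro member_le_sum) auto
      hence "(z j)^2 \<le> 1" using z by simp
      thus ?thesis by (simp add: abs_square_le_1)
    qed
    have r: "\<bar>\<Sum>j<n. A i j * z j\<bar> \<le> (\<Sum>j<n. \<bar>A i j\<bar>)" for i
    proof -
      have "\<bar>\<Sum>j<n. A i j * z j\<bar> \<le> (\<Sum>j<n. \<bar>A i j * z j\<bar>)" by (rule sum_abs)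
      also have "\<dots> \<le> (\<Sum>j<n. \<bar>A i j\<bar>)"
      proof (intro sum_mono)
        fix j assume "j \<in> {..<n}"
        hence "\<bar>z j\<bar> \<le> 1" using zj by auto
        thus "\<bar>A i j * z j\<bar> \<le> \<bar>A i j\<bar>" by (simp add: abs_mult mult_left_le)
      qed
      finally show ?thesis .
    qed
    have "y = L2_set (\<lambda>i. \<Sum>j<n. A i j * z j) {..<n}" unfolding y L2_set_def ..
    also have "\<dots> \<le> (\<Sum>i<n. \<bar>\<Sum>j<n. A i j * z j\<bar>)" by (rule L2_set_le_sum_abs)
    also have "\<dots> \<le> (\<Sum>i<n. \<Sum>j<n. \<bar>A i j\<bar>)" by (intro sum_mono r)
    finally show "y \<le> (\<Sum>i<n. \<Sum>j<n. \<bar>A i j\<bar>)" .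
  qed
  define s where "s = sqrt (nrm n x)"
  have s0: "0 < s" unfolding s_def using False nrm_nonneg[of n x] by simp
  define y where "y = (\<lambda>j. x j / s)"
  have ny: "(\<Sum>j<n. (y j)\<^sup>2) = 1"
  proof -
    have "(\<Sum>j<n. (y j)\<^sup>2) = (\<Sum>j<n. (x j)\<^sup>2) / s^2"
      unfolding y_def by (simp add: power_divide sum_divide_distrib)
    also have "\<dots> = 1" using s0 False nrm_nonneg[of n x] unfolding s_def nrm_def by simp
    finally show ?thesis .
  qed
  have mem: "sqrt (\<Sum>i<n. (\<Sum>j<n. A i j * y j)\<^sup>2) \<in> ?S" using ny by force
  have sup: "Sup ?S = 1" using assms unfolding op_norm_def .
  have le1: "sqrt (\<Sum>i<n. (\<Sum>j<n. A i j * y j)\<^sup>2) \<le> 1"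
    using cSup_upper[OF mem bdd] unfolding sup .
  have "(\<Sum>i<n. (\<Sum>j<n. A i j * y j)\<^sup>2) = nrm n (mv n A x) / s^2"
    unfolding y_def mv_def nrm_def
    by (simp add: sum_divide_distrib[symmetric] power_divide times_divide_eq_right)
  hence "sqrt (nrm n (mv n A x) / s^2) \<le> 1" using le1 by simp
  hence "nrm n (mv n A x) / s^2 \<le> 1" by simp
  hence "nrm n (mv n A x) \<le> s^2" using s0 by (simp add: divide_le_eq)
  thus ?thesis unfolding s_def using nrm_nonneg[of n x] by simp
qed

lemma bil_bound:
  assumes H: "\<And>x. nrm n (mv n A x) \<le> nrm n x"
  shows "\<bar>bil n A u v\<bar> \<le> sqrt (nrm n u) * sqrt (nrm n v)"
proof -
  have "\<bar>bil n A u v\<bar> = \<bar>\<Sum>i<n. u i * mv n A v i\<bar>" by (simp add: bil_mv)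
  also have "\<dots> \<le> (\<Sum>i<n. \<bar>u i\<bar> * \<bar>mv n A v i\<bar>)"
    using sum_abs[of "\<lambda>i. u i * mv n A v i" "{..<n}"] by (simp add: abs_mult)
  also have "\<dots> \<le> L2_set u {..<n} * L2_set (mv n A v) {..<n}" by (rule L2_set_mult_ineq)
  also have "\<dots> = sqrt (nrm n u) * sqrt (nrm n (mv n A v))" by (simp add: nrm_L2)
  also have "\<dots> \<le> sqrt (nrm n u) * sqrt (nrm n v)"
    using H[of v] nrm_nonneg[of n u] by (intro mult_left_mono) auto
  finally show ?thesis .
qed

lemma frob_bound:
  assumes H: "\<And>u v. \<bar>bil n A u v\<bar> \<le> sqrt (nrm n u) * sqrt (nrm n v)"
  shows "\<bar>\<Sum>i<n. \<Sum>j<n. A i j * ipr n (a i) (b j)\<bar>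
         \<le> sqrt (\<Sum>i<n. ipr n (a i) (a i)) * sqrt (\<Sum>j<n. ipr n (b j) (b j))"
proof -
  define ca where "ca = (\<lambda>k i. a i k)"
  define cb where "cb = (\<lambda>k j. b j k)"
  have e: "(\<Sum>i<n. \<Sum>j<n. A i j * ipr n (a i) (b j)) = (\<Sum>k<n. bil n A (ca k) (cb k))"
  proof -
    have "(\<Sum>i<n. \<Sum>j<n. A i j * ipr n (a i) (b j)) = (\<Sum>i<n. \<Sum>j<n. \<Sum>k<n. a i k * A i j * b j k)"
      unfolding ipr_def by (simp add: sum_distrib_left algebra_simps)
    also have "\<dots> = (\<Sum>i<n. \<Sum>k<n. \<Sum>j<n. a i k * A i j * b j k)"
      by (intro sum.cong refl sum.swap)
    also have "\<dots> = (\<Sum>k<n. \<Sum>i<n. \<Sum>j<n. a i k * A i j * b j k)"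
      by (rule sum.swap)
    also have "\<dots> = (\<Sum>k<n. bil n A (ca k) (cb k))" unfolding bil_def ca_def cb_def ..
    finally show ?thesis .
  qed
  have na: "(\<Sum>k<n. nrm n (ca k)) = (\<Sum>i<n. ipr n (a i) (a i))"
    unfolding nrm_def ca_def ipr_def by (subst sum.swap) (simp add: power2_eq_square)
  have nb: "(\<Sum>k<n. nrm n (cb k)) = (\<Sum>j<n. ipr n (b j) (b j))"
    unfolding nrm_def cb_def ipr_def by (subst sum.swap) (simp add: power2_eq_square)
  have "\<bar>\<Sum>k<n. bil n A (ca k) (cb k)\<bar> \<le> (\<Sum>k<n. \<bar>bil n A (ca k) (cb k)\<bar>)" by (rule sum_abs)
  also have "\<dots> \<le> (\<Sum>k<n. \<bar>sqrt (nrm n (ca k))\<bar> * \<bar>sqrt (nrm n (cb k))\<bar>)"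
    using H by (intro sum_mono) (simp add: nrm_nonneg)
  also have "\<dots> \<le> L2_set (\<lambda>k. sqrt (nrm n (ca k))) {..<n} * L2_set (\<lambda>k. sqrt (nrm n (cb k))) {..<n}"
    by (rule L2_set_mult_ineq)
  also have "\<dots> = sqrt (\<Sum>k<n. nrm n (ca k)) * sqrt (\<Sum>k<n. nrm n (cb k))"
    unfolding L2_set_def by (simp add: nrm_nonneg)
  finally show ?thesis unfolding e na nb .
qed


lemma pm1_cases: "\<bar>a::real\<bar> = 1 \<Longrightarrow> a = 1 \<or> a = -1"
  by (auto simp: abs_if split: if_splits)

lemma pm1_sq: "\<bar>a::real\<bar> = 1 \<Longrightarrow> \<bar>b\<bar> = 1 \<Longrightarrow> (a - b)^2 \<le> 4 \<and> (a + b)^2 \<le> 4"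
  using pm1_cases[of a] pm1_cases[of b] by auto

lemma sgn_pm_div: "0 < r \<Longrightarrow> sgn_pm (y / r) = sgn_pm y"
  unfolding sgn_pm_def by (simp add: divide_less_0_iff)

lemma qf_diff_bil:
  assumes "symn n C"
  shows "quad_form n C x - quad_form n C y = bil n C (\<lambda>i. x i - y i) (\<lambda>i. x i + y i)"
  using bil_sym[OF assms, of x y] unfolding qf_bil
  by (simp add: bil_diff1 bil_add2)

locale rsetup =
  fixes m :: nat and B \<rho>opt \<rho> :: "nat\<Rightarrow>nat\<Rightarrow>real" and \<epsilon> :: real and n :: nat and C :: "nat\<Rightarrow>nat\<Rightarrow>real"
  assumes n_def: "n = 2 * m" and C_def: "C = block_cost m B"
    and opn: "op_norm n C = 1"
    and opt: "sdp_optimal n C \<rho>opt"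
    and pr: "psd n \<rho>"
    and trg: "mat_trace n (mat_mult n C \<rho>opt) - mat_trace n (mat_mult n C \<rho>) \<le> \<epsilon>"
    and dg: "(\<Sum>i<n. \<bar>\<rho> i i - 1 / real n\<bar>) \<le> \<epsilon>"
    and e0: "0 \<le> \<epsilon>" and e1: "\<epsilon> \<le> 1/2"

context rsetup
begin

lemma n_pos: "0 < n"
proof (rule ccontr)
  assume "\<not> 0 < n"
  hence "n = 0" by simp
  hence "op_norm n C = 0" by (simp add: op_norm_def)
  thus False using opn by simp
qed

lemma C_sym: "C i j = C j i"
  unfolding C_def block_cost_def by auto

lemma C_symn: "symn n C" unfolding symn_def using C_sym by auto

lemma C_mv: "nrm n (mv n C x) \<le> nrm n x" by (rule opnorm_mv[OF opn])

lemma C_bil: "\<bar>bil n C u v\<bar> \<le> sqrt (nrm n u) * sqrt (nrm n v)"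
  by (rule bil_bound[OF C_mv])

definition "S = mat_sqrt n \<rho>"
definition "sv i = (\<lambda>k. S i k)"
definition "d i = \<rho> i i"
definition "st i = (if 0 < d i then (\<lambda>k. S i k / sqrt (d i)) else (\<lambda>k. if k = 0 then 1 else 0))"
definition "xt g i = sgn_pm (lin n (st i) g)"

lemma S_props: "psd n S" "\<And>i j. i < n \<Longrightarrow> j < n \<Longrightarrow> mat_mult n S S i j = \<rho> i j"
  using mat_sqrt_props[OF pr] unfolding S_def by auto

lemma gram: "i < n \<Longrightarrow> j < n \<Longrightarrow> \<rho> i j = ipr n (sv i) (sv j)"
proof -
  assume ij: "i < n" "j < n"
  have sS: "symn n S" using S_props(1) by (simp add: psd_iff)
  have "\<rho> i j = mat_mult n S S i j" using S_props(2)[OF ij] by simp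
  also have "\<dots> = ipr n (sv i) (sv j)"
    unfolding mat_mult_def ipr_def sv_def using sS ij unfolding symn_def
    by (intro sum.cong refl) auto
  finally show ?thesis .
qed

lemma d_ipr: "i < n \<Longrightarrow> d i = ipr n (sv i) (sv i)"
  unfolding d_def using gram by simp

lemma d_nonneg: "i < n \<Longrightarrow> 0 \<le> d i"
  using d_ipr ipr_nonneg by simp

lemma st_unit: "i < n \<Longrightarrow> ipr n (st i) (st i) = 1"
proof -
  assume i: "i < n"
  show ?thesis
  proof (cases "0 < d i")
    case True
    have sq: "sqrt (d i) * sqrt (d i) = d i" using True by simp
    have "ipr n (st i) (st i) = (\<Sum>k<n. S i k * S i k / d i)"
      unfolding st_def ipr_def using True
    proof (intro sum.cong refl)
      fix k
      have "(S i k / sqrt (d i)) * (S i k / sqrt (d i)) = S i k * S i k / (sqrt (d i) * sqrt (d i))"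
        by simp
      thus "(if 0 < d i then \<lambda>k. S i k / sqrt (d i) else (\<lambda>k. if k = 0 then 1 else 0)) k *
            (if 0 < d i then \<lambda>k. S i k / sqrt (d i) else (\<lambda>k. if k = 0 then 1 else 0)) k =
            S i k * S i k / d i" using True sq by simp
    qed
    also have "\<dots> = ipr n (sv i) (sv i) / d i"
      unfolding ipr_def sv_def by (simp add: sum_divide_distrib)
    also have "\<dots> = 1" using True d_ipr[OF i] by simp
    finally show ?thesis .
  next
    case False
    have "ipr n (st i) (st i) = (\<Sum>k<n. if k = 0 then 1 else 0)"
      unfolding st_def ipr_def using False by (intro sum.cong refl) auto
    also have "\<dots> = 1" using n_pos by simp
    finally show ?thesis .
  qed
qed

lemma rounding_eq: "i < n \<Longrightarrow> rounding n \<rho> g i = (if 0 < d i then xt g i else 1)"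
proof -
  assume i: "i < n"
  have r: "rounding n \<rho> g i = sgn_pm (lin n (sv i) g)"
    unfolding rounding_def lin_def sv_def S_def ..
  show ?thesis
  proof (cases "0 < d i")
    case True
    have "lin n (st i) g = lin n (sv i) g / sqrt (d i)"
      unfolding st_def lin_def sv_def using True by (simp add: sum_divide_distrib)
    thus ?thesis using True r by (simp add: xt_def sgn_pm_div)
  next
    case False
    hence "d i = 0" using d_nonneg[OF i] by simp
    hence "ipr n (sv i) (sv i) = 0" using d_ipr[OF i] by simp
    hence "lin n (sv i) g = 0" by (rule lin_zero)
    thus ?thesis using False r by (simp add: sgn_pm_def)
  qed
qed

lemma pointwise:
  "quad_form n C (xt g) - 4 * n * sqrt \<epsilon> \<le> quad_form n C (rounding n \<rho> g)"
proof -
  let ?a = "rounding n \<rho> g" and ?b = "xt g"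
  have a1: "\<bar>?a i\<bar> = 1" for i unfolding rounding_def sgn_pm_def by simp
  have b1: "\<bar>?b i\<bar> = 1" for i unfolding xt_def sgn_pm_def by simp
  have "nrm n (\<lambda>i. ?a i - ?b i) \<le> (\<Sum>i<n. 4 * n * \<bar>\<rho> i i - 1 / real n\<bar>)"
    unfolding nrm_def
  proof (intro sum_mono)
    fix i assume "i \<in> {..<n}"
    hence i: "i < n" by simp
    show "(?a i - ?b i)^2 \<le> 4 * n * \<bar>\<rho> i i - 1 / real n\<bar>"
    proof (cases "0 < d i")
      case True
      thus ?thesis using rounding_eq[OF i] by simp
    next
      case False
      hence "\<rho> i i = 0" using d_nonneg[OF i] unfolding d_def by simp
      hence "4 * n * \<bar>\<rho> i i - 1 / real n\<bar> = 4" using n_pos by simp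
      thus ?thesis using pm1_sq[OF a1 b1, of i i] by simp
    qed
  qed
  also have "\<dots> = 4 * n * (\<Sum>i<n. \<bar>\<rho> i i - 1 / real n\<bar>)" by (simp add: sum_distrib_left)
  also have "\<dots> \<le> 4 * n * \<epsilon>" using dg by (intro mult_left_mono) auto
  finally have na: "nrm n (\<lambda>i. ?a i - ?b i) \<le> 4 * n * \<epsilon>" .
  have "nrm n (\<lambda>i. ?a i + ?b i) \<le> (\<Sum>i<n. 4)"
    unfolding nrm_def using pm1_sq[OF a1 b1] by (intro sum_mono) auto
  hence nb: "nrm n (\<lambda>i. ?a i + ?b i) \<le> 4 * n" by simp
  have "\<bar>quad_form n C ?a - quad_form n C ?b\<bar> \<le> sqrt (nrm n (\<lambda>i. ?a i - ?b i)) * sqrt (nrm n (\<lambda>i. ?a i + ?b i))"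
    unfolding qf_diff_bil[OF C_symn] by (rule C_bil)
  also have "\<dots> \<le> sqrt (4 * n * \<epsilon>) * sqrt (4 * n)"
    using na nb e0 by (intro mult_mono) (auto simp: nrm_nonneg)
  also have "\<dots> = 4 * n * sqrt \<epsilon>"
    using e0 by (simp add: real_sqrt_mult[symmetric] power2_eq_square[symmetric] algebra_simps)
         (simp add: real_sqrt_mult)
  finally show ?thesis by linarith
qed

end

context rsetup
begin

definition "cc = sqrt (2/pi)"
definition "w i g = xt g i - cc * lin n (st i) g"
definition "Z i j = (\<integral>g. w i g * w j g \<partial>gauss_vec n)"
definition "X i j = ipr n (st i) (st j)"

lemma cc_sq: "cc * cc = 2/pi" unfolding cc_def by (simp add: real_sqrt_mult[symmetric])

lemma xt_meas[measurable]: "(\<lambda>g. xt g i) \<in> borel_measurable (gauss_vec n)"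
  unfolding xt_def by measurable

lemma xt_abs: "\<bar>xt g i\<bar> = 1" unfolding xt_def sgn_pm_def by simp

lemma int_xx: "integrable (gauss_vec n) (\<lambda>g. xt g i * xt g j)"
  by (rule G.integrable_const_bound[where B=1]) (auto simp: abs_mult xt_abs)

lemma int_xy: "integrable (gauss_vec n) (\<lambda>g. xt g i * lin n a g)"
  unfolding xt_def by (rule lin_sgn_integrable)

lemma int_yx: "integrable (gauss_vec n) (\<lambda>g. lin n a g * xt g i)"
  using int_xy[of i a] by (simp add: mult.commute)

lemma int_yy: "integrable (gauss_vec n) (\<lambda>g. lin n a g * lin n b g)"
  using lin_prod by blast

lemma ww_expand: "w i g * w j g = xt g i * xt g j - cc * (xt g i * lin n (st j) g)
   - cc * (lin n (st i) g * xt g j) + (cc * cc) * (lin n (st i) g * lin n (st j) g)"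
  unfolding w_def by (simp add: algebra_simps)

lemma int_ww: "integrable (gauss_vec n) (\<lambda>g. w i g * w j g)"
  unfolding ww_expand using int_xx int_xy int_yx int_yy by auto

lemma E_xy: "i < n \<Longrightarrow> (\<integral>g. xt g i * lin n (st j) g \<partial>gauss_vec n) = cc * X i j"
  unfolding xt_def cc_def X_def by (rule lin_sgn[OF st_unit])

lemma E_yx: "j < n \<Longrightarrow> (\<integral>g. lin n (st i) g * xt g j \<partial>gauss_vec n) = cc * X i j"
  using E_xy[of j i] by (simp add: mult.commute X_def ipr_sym)

lemma E_yy: "(\<integral>g. lin n (st i) g * lin n (st j) g \<partial>gauss_vec n) = X i j"
  unfolding X_def using lin_prod by blast

lemma Z_val: "i < n \<Longrightarrow> j < n \<Longrightarrow> Z i j = (\<integral>g. xt g i * xt g j \<partial>gauss_vec n) - (2/pi) * X i j"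
proof -
  assume ij: "i < n" "j < n"
  have "Z i j = (\<integral>g. xt g i * xt g j \<partial>gauss_vec n) - cc * (\<integral>g. xt g i * lin n (st j) g \<partial>gauss_vec n)
     - cc * (\<integral>g. lin n (st i) g * xt g j \<partial>gauss_vec n) + (cc * cc) * (\<integral>g. lin n (st i) g * lin n (st j) g \<partial>gauss_vec n)"
    unfolding Z_def ww_expand using int_xx int_xy int_yx int_yy by simp
  also have "\<dots> = (\<integral>g. xt g i * xt g j \<partial>gauss_vec n) - (cc * cc) * X i j"
    unfolding E_xy[OF ij(1)] E_yx[OF ij(2)] E_yy by (simp add: algebra_simps)
  finally show ?thesis unfolding cc_sq .
qed

lemma Z_diag: "i < n \<Longrightarrow> Z i i = 1 - 2/pi"
proof -
  assume i: "i < n"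
  have "(\<integral>g. xt g i * xt g i \<partial>gauss_vec n) = (\<integral>g. 1 \<partial>gauss_vec n)"
    by (intro Bochner_Integration.integral_cong refl) (simp add: xt_def sgn_pm_def)
  also have "\<dots> = 1" by (simp add: G.prob_space)
  finally show ?thesis using Z_val[OF i i] st_unit[OF i] unfolding X_def by simp
qed

lemma Z_sym: "Z i j = Z j i" unfolding Z_def by (simp add: mult.commute)

lemma Z_psd: "0 \<le> (\<Sum>i<n. \<Sum>j<n. a i * Z i j * a j)"
proof -
  have "(\<Sum>i<n. \<Sum>j<n. a i * Z i j * a j) = (\<integral>g. (\<Sum>i<n. \<Sum>j<n. a i * (w i g * w j g) * a j) \<partial>gauss_vec n)"
    unfolding Z_def using int_ww by (simp add: integral_sum integrable_sum)
  also have "\<dots> = (\<integral>g. (\<Sum>i<n. a i * w i g)^2 \<partial>gauss_vec n)"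
    by (intro Bochner_Integration.integral_cong refl)
       (simp add: power2_eq_square sum_product algebra_simps)
  also have "0 \<le> \<dots>" by simp
  finally show ?thesis .
qed

lemma E_qf_xt: "(\<integral>g. quad_form n C (xt g) \<partial>gauss_vec n) = (\<Sum>i<n. \<Sum>j<n. C i j * (\<integral>g. xt g i * xt g j \<partial>gauss_vec n))"
proof -
  have "(\<integral>g. quad_form n C (xt g) \<partial>gauss_vec n) = (\<Sum>i<n. \<Sum>j<n. (\<integral>g. C i j * (xt g i * xt g j) \<partial>gauss_vec n))"
    unfolding quad_form_def using int_xx
    by (simp add: integral_sum integrable_sum algebra_simps)
  thus ?thesis by simp
qed

lemma int_qf_xt: "integrable (gauss_vec n) (\<lambda>g. quad_form n C (xt g))"
  unfolding quad_form_def using int_xx by (simp add: integrable_sum algebra_simps)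

lemma rounding_lin: "rounding n \<rho> g i = sgn_pm (lin n (sv i) g)"
  unfolding rounding_def lin_def sv_def S_def ..

lemma int_qf_r: "integrable (gauss_vec n) (\<lambda>g. quad_form n C (rounding n \<rho> g))"
proof (rule G.integrable_const_bound[where B="\<Sum>i<n. \<Sum>j<n. \<bar>C i j\<bar>"])
  show "(\<lambda>g. quad_form n C (rounding n \<rho> g)) \<in> borel_measurable (gauss_vec n)"
    unfolding quad_form_def rounding_lin by measurable
  show "AE g in gauss_vec n. norm (quad_form n C (rounding n \<rho> g)) \<le> (\<Sum>i<n. \<Sum>j<n. \<bar>C i j\<bar>)"
  proof (intro AE_I2)
    fix g
    have a1: "\<bar>rounding n \<rho> g i\<bar> = 1" for i unfolding rounding_def sgn_pm_def by simp
    have "\<bar>quad_form n C (rounding n \<rho> g)\<bar> \<le> (\<Sum>i<n. \<Sum>j<n. \<bar>rounding n \<rho> g i * C i j * rounding n \<rho> g j\<bar>)"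
      unfolding quad_form_def by (rule order_trans[OF sum_abs sum_mono[OF sum_abs]])
    also have "\<dots> = (\<Sum>i<n. \<Sum>j<n. \<bar>C i j\<bar>)" by (simp add: abs_mult a1)
    finally show "norm (quad_form n C (rounding n \<rho> g)) \<le> (\<Sum>i<n. \<Sum>j<n. \<bar>C i j\<bar>)" by simp
  qed
qed

lemma E_compare:
  "(\<integral>g. quad_form n C (xt g) \<partial>gauss_vec n) - 4 * n * sqrt \<epsilon> \<le> (\<integral>g. quad_form n C (rounding n \<rho> g) \<partial>gauss_vec n)"
proof -
  have "(\<integral>g. quad_form n C (xt g) - 4 * n * sqrt \<epsilon> \<partial>gauss_vec n) \<le> (\<integral>g. quad_form n C (rounding n \<rho> g) \<partial>gauss_vec n)"
    using int_qf_xt int_qf_r pointwise by (intro integral_mono) auto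
  moreover have "(\<integral>g. quad_form n C (xt g) - 4 * n * sqrt \<epsilon> \<partial>gauss_vec n) = (\<integral>g. quad_form n C (xt g) \<partial>gauss_vec n) - 4 * n * sqrt \<epsilon>"
    using int_qf_xt by (simp add: G.prob_space)
  ultimately show ?thesis by simp
qed

end

lemma sqrt_sqrt_mult: "sqrt (real n) * (sqrt (real n) * x) = real n * x"
  by (simp add: mult.assoc[symmetric])

lemma sqrt_sqrt_mult2: "sqrt (real n) * a * (sqrt (real n) * b) = real n * (a * b)"
proof -
  have "sqrt (real n) * a * (sqrt (real n) * b) = (sqrt (real n) * sqrt (real n)) * (a * b)" by (simp only: mult_ac)
  thus ?thesis by simp
qed

lemma le_sqrt_self: "0 \<le> (x::real) \<Longrightarrow> x \<le> 1 \<Longrightarrow> x \<le> sqrt x"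
proof -
  assume a: "0 \<le> x" "x \<le> 1"
  have "sqrt x * sqrt x \<le> sqrt x * 1" using a by (intro mult_left_mono) auto
  thus ?thesis using a by simp
qed

lemma one_minus_sq: assumes "0 \<le> (a::real)" shows "(1 - a)^2 \<le> \<bar>1 - a^2\<bar>"
proof (cases "a \<le> 1")
  case True
  have "a * a \<le> a * 1" using True assms by (intro mult_left_mono) auto
  hence "(1 - a)^2 \<le> 1 - a^2" by (simp add: power2_eq_square algebra_simps)
  thus ?thesis by simp
next
  case False
  have "(1 - a)^2 \<le> a^2 - 1" using False by (simp add: power2_eq_square algebra_simps)
  thus ?thesis by simp
qed

context rsetup
begin

definition "t0 = 1 - 2/pi"
definition "V = mat_trace n (mat_mult n C \<rho>opt)"
definition "fs i = (if i < m then (1::real) else -1)"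

lemma t0_pos: "0 < t0"
proof -
  have "2 / pi < 1" using pi_gt3 by (simp add: divide_less_eq)
  thus ?thesis unfolding t0_def by simp
qed

lemma C_flip: "i < n \<Longrightarrow> k < n \<Longrightarrow> C i k * fs i * fs k = - C i k"
  unfolding C_def block_cost_def fs_def n_def by auto

lemma CZ_bound: "- (n * t0 * V) \<le> (\<Sum>i<n. \<Sum>j<n. C i j * Z i j)"
proof -
  define \<sigma> where "\<sigma> = (\<lambda>i j. fs i * fs j * Z i j / (n * t0))"
  have np: "0 < real n * t0" using n_pos t0_pos by simp
  have feas: "sdp_feasible n \<sigma>"
    unfolding sdp_feasible_def psd_def
  proof (intro conjI allI impI)
    fix i j assume "i < n" "j < n"
    show "\<sigma> i j = \<sigma> j i" unfolding \<sigma>_def by (simp add: Z_sym mult.commute)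
  next
    fix x :: "nat \<Rightarrow> real"
    have "(\<Sum>i<n. \<Sum>j<n. x i * \<sigma> i j * x j) = (\<Sum>i<n. \<Sum>j<n. (fs i * x i) * Z i j * (fs j * x j)) / (n * t0)"
      unfolding \<sigma>_def by (simp add: sum_divide_distrib algebra_simps)
    also have "0 \<le> \<dots>" using Z_psd[of "\<lambda>i. fs i * x i"] np by simp
    finally show "0 \<le> (\<Sum>i<n. \<Sum>j<n. x i * \<sigma> i j * x j)" .
  next
    fix i assume i: "i < n"
    have "fs i * fs i = 1" unfolding fs_def by simp
    have "\<sigma> i i = (fs i * fs i) * t0 / (n * t0)" unfolding \<sigma>_def Z_diag[OF i] t0_def by simp
    thus "\<sigma> i i = 1 / real n" using t0_pos \<open>fs i * fs i = 1\<close> by simp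
  qed
  hence le: "mat_trace n (mat_mult n C \<sigma>) \<le> V"
    using opt unfolding sdp_optimal_def V_def by blast
  have "mat_trace n (mat_mult n C \<sigma>) = (\<Sum>i<n. \<Sum>k<n. (C i k * fs i * fs k) * Z i k) / (n * t0)"
    unfolding mat_trace_def mat_mult_def \<sigma>_def
    by (simp add: sum_divide_distrib Z_sym[of _ i for i] algebra_simps)
  also have "\<dots> = - (\<Sum>i<n. \<Sum>k<n. C i k * Z i k) / (n * t0)"
    by (simp add: C_flip sum_negf)
  finally have "- (\<Sum>i<n. \<Sum>k<n. C i k * Z i k) / (n * t0) \<le> V" using le by simp
  hence h: "(- (\<Sum>i<n. \<Sum>k<n. C i k * Z i k) / (n * t0)) * (n * t0) \<le> V * (n * t0)"
    using np by (intro mult_right_mono) auto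
  have "(- (\<Sum>i<n. \<Sum>k<n. C i k * Z i k) / (n * t0)) * (n * t0) = - (\<Sum>i<n. \<Sum>k<n. C i k * Z i k)"
    using np t0_pos by simp
  with h show ?thesis by (simp add: algebra_simps)
qed


lemma sum_d: "(\<Sum>i<n. d i) \<le> 1 + \<epsilon>"
proof -
  have "(\<Sum>i<n. d i) \<le> (\<Sum>i<n. 1 / real n + \<bar>\<rho> i i - 1 / real n\<bar>)"
    unfolding d_def by (intro sum_mono) linarith
  also have "\<dots> = 1 + (\<Sum>i<n. \<bar>\<rho> i i - 1 / real n\<bar>)" using n_pos by (simp add: sum.distrib)
  finally show ?thesis using dg by linarith
qed

definition "u i = (\<lambda>k. sqrt n * sv i k)"
definition "Dl i = (\<lambda>k. st i k - u i k)"

lemma Dl_bound: "i < n \<Longrightarrow> ipr n (Dl i) (Dl i) \<le> n * \<bar>\<rho> i i - 1 / real n\<bar>"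
proof -
  assume i: "i < n"
  show ?thesis
  proof (cases "0 < d i")
    case True
    let ?r = "1 / sqrt (d i) - sqrt n"
    have e: "Dl i = (\<lambda>k. ?r * sv i k)"
      unfolding Dl_def u_def st_def sv_def using True by (auto simp: fun_eq_iff algebra_simps)
    have "ipr n (Dl i) (Dl i) = ?r^2 * ipr n (sv i) (sv i)"
      unfolding e ipr_def sum_distrib_left by (intro sum.cong refl) (simp only: power2_eq_square mult_ac)
    also have "\<dots> = ?r^2 * d i" using d_ipr[OF i] by simp
    also have "\<dots> = (1 - sqrt n * sqrt (d i))^2"
    proof -
      have "?r * sqrt (d i) = 1 - sqrt n * sqrt (d i)" using True by (simp add: algebra_simps)
      hence "(?r * sqrt (d i))^2 = (1 - sqrt n * sqrt (d i))^2" by simp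
      thus ?thesis using True by (simp add: power_mult_distrib)
    qed
    also have "\<dots> \<le> \<bar>1 - (sqrt n * sqrt (d i))^2\<bar>" using True by (intro one_minus_sq) simp
    also have "(sqrt n * sqrt (d i))^2 = n * d i" using True by (simp add: power_mult_distrib)
    also have "\<bar>1 - n * d i\<bar> = n * \<bar>\<rho> i i - 1 / real n\<bar>"
    proof -
      have "1 - n * d i = n * (1 / real n - \<rho> i i)" using n_pos unfolding d_def by (simp add: field_simps)
      hence "\<bar>1 - n * d i\<bar> = n * \<bar>1 / real n - \<rho> i i\<bar>" by (simp add: abs_mult)
      thus ?thesis by (simp add: abs_minus_commute)
    qed
    finally show ?thesis .
  next
    case False
    have z: "sv i k = 0" if "k < n" for k
      using False d_nonneg[OF i] d_ipr[OF i] ipr_zero[of n "sv i" k] that by simp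
    have "ipr n (Dl i) (Dl i) = (\<Sum>k<n. if k = 0 then 1 else 0)"
      unfolding ipr_def Dl_def u_def st_def using False z by (intro sum.cong refl) auto
    also have "\<dots> = 1" using n_pos by simp
    also have "1 = n * \<bar>\<rho> i i - 1 / real n\<bar>"
      using False d_nonneg[OF i] n_pos unfolding d_def by simp
    finally show ?thesis by simp
  qed
qed

lemma Dl_sum: "(\<Sum>i<n. ipr n (Dl i) (Dl i)) \<le> n * \<epsilon>"
proof -
  have "(\<Sum>i<n. ipr n (Dl i) (Dl i)) \<le> (\<Sum>i<n. n * \<bar>\<rho> i i - 1 / real n\<bar>)"
    by (intro sum_mono Dl_bound) simp
  also have "\<dots> = n * (\<Sum>i<n. \<bar>\<rho> i i - 1 / real n\<bar>)" by (simp add: sum_distrib_left)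
  also have "\<dots> \<le> n * \<epsilon>" using dg by (intro mult_left_mono) auto
  finally show ?thesis .
qed

lemma u_sum: "(\<Sum>i<n. ipr n (u i) (u i)) \<le> n * (1 + \<epsilon>)"
proof -
  have "(\<Sum>i<n. ipr n (u i) (u i)) = n * (\<Sum>i<n. d i)"
    unfolding u_def ipr_def sum_distrib_left
    by (intro sum.cong refl) (simp add: d_ipr ipr_def sum_distrib_left sqrt_sqrt_mult2)
  also have "\<dots> \<le> n * (1 + \<epsilon>)" using sum_d by (intro mult_left_mono) auto
  finally show ?thesis .
qed

lemma st_sum: "(\<Sum>i<n. ipr n (st i) (st i)) = n"
  using st_unit by simp

definition "T = mat_trace n (mat_mult n C \<rho>)"

lemma T_eq: "n * T = (\<Sum>i<n. \<Sum>j<n. C i j * ipr n (u i) (u j))"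
proof -
  have "T = (\<Sum>i<n. \<Sum>j<n. C i j * ipr n (sv i) (sv j))"
    unfolding T_def mat_trace_def mat_mult_def
  proof (intro sum.cong refl)
    fix i j assume ij: "i \<in> {..<n}" "j \<in> {..<n}"
    have "\<rho> j i = ipr n (sv j) (sv i)" using gram ij by simp
    also have "\<dots> = ipr n (sv i) (sv j)" by (rule ipr_sym)
    finally show "C i j * \<rho> j i = C i j * ipr n (sv i) (sv j)" by (simp only:)
  qed
  hence "n * T = (\<Sum>i<n. \<Sum>j<n. C i j * (n * ipr n (sv i) (sv j)))"
    by (simp add: sum_distrib_left mult_ac)
  moreover have "ipr n (u i) (u j) = n * ipr n (sv i) (sv j)" for i j
    unfolding u_def ipr_def sum_distrib_left by (intro sum.cong refl) (rule sqrt_sqrt_mult2)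
  ultimately show ?thesis by simp
qed

lemma CX_bound: "n * T - 3 * (n * sqrt \<epsilon>) \<le> (\<Sum>i<n. \<Sum>j<n. C i j * X i j)"
proof -
  have split: "X i j - ipr n (u i) (u j) = ipr n (Dl i) (st j) + ipr n (u i) (Dl j)" for i j
    unfolding X_def Dl_def ipr_def by (simp add: algebra_simps sum_subtractf sum.distrib)
  have "(\<Sum>i<n. \<Sum>j<n. C i j * X i j) - n * T
      = (\<Sum>i<n. \<Sum>j<n. C i j * ipr n (Dl i) (st j)) + (\<Sum>i<n. \<Sum>j<n. C i j * ipr n (u i) (Dl j))"
  proof -
    have "(\<Sum>i<n. \<Sum>j<n. C i j * X i j) - n * T = (\<Sum>i<n. \<Sum>j<n. C i j * (X i j - ipr n (u i) (u j)))"
      unfolding T_eq by (simp add: sum_subtractf algebra_simps)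
    also have "\<dots> = (\<Sum>i<n. \<Sum>j<n. C i j * ipr n (Dl i) (st j) + C i j * ipr n (u i) (Dl j))"
      unfolding split by (simp add: algebra_simps)
    finally show ?thesis by (simp add: sum.distrib)
  qed
  moreover have b1: "\<bar>\<Sum>i<n. \<Sum>j<n. C i j * ipr n (Dl i) (st j)\<bar> \<le> n * sqrt \<epsilon>"
  proof -
    have "\<bar>\<Sum>i<n. \<Sum>j<n. C i j * ipr n (Dl i) (st j)\<bar>
        \<le> sqrt (\<Sum>i<n. ipr n (Dl i) (Dl i)) * sqrt (\<Sum>j<n. ipr n (st j) (st j))"
      by (rule frob_bound[OF C_bil])
    also have "\<dots> \<le> sqrt (n * \<epsilon>) * sqrt n"
      unfolding st_sum using Dl_sum by (intro mult_right_mono) auto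
    also have "\<dots> = n * sqrt \<epsilon>" by (simp add: real_sqrt_mult)
    finally show ?thesis .
  qed
  moreover have b2: "\<bar>\<Sum>i<n. \<Sum>j<n. C i j * ipr n (u i) (Dl j)\<bar> \<le> 2 * (n * sqrt \<epsilon>)"
  proof -
    have Dn: "0 \<le> (\<Sum>j<n. ipr n (Dl j) (Dl j))" by (intro sum_nonneg) (simp add: ipr_nonneg)
    have "\<bar>\<Sum>i<n. \<Sum>j<n. C i j * ipr n (u i) (Dl j)\<bar>
        \<le> sqrt (\<Sum>i<n. ipr n (u i) (u i)) * sqrt (\<Sum>j<n. ipr n (Dl j) (Dl j))"
      by (rule frob_bound[OF C_bil])
    also have "\<dots> \<le> sqrt (4 * real n) * sqrt (n * \<epsilon>)"
    proof (intro mult_mono)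
      have "real n * (1 + \<epsilon>) \<le> real n * 4" using e1 by (intro mult_left_mono) auto
      thus "sqrt (\<Sum>i<n. ipr n (u i) (u i)) \<le> sqrt (4 * real n)" using u_sum by (simp add: mult.commute)
      show "sqrt (\<Sum>j<n. ipr n (Dl j) (Dl j)) \<le> sqrt (n * \<epsilon>)" using Dl_sum by simp
    qed (auto simp: Dn)
    also have "\<dots> = 2 * (n * sqrt \<epsilon>)" by (simp add: real_sqrt_mult)
    finally show ?thesis .
  qed
  ultimately have eqA: "(\<Sum>i<n. \<Sum>j<n. C i j * X i j) - n * T
      = (\<Sum>i<n. \<Sum>j<n. C i j * ipr n (Dl i) (st j)) + (\<Sum>i<n. \<Sum>j<n. C i j * ipr n (u i) (Dl j))"
    and b1': "- (n * sqrt \<epsilon>) \<le> (\<Sum>i<n. \<Sum>j<n. C i j * ipr n (Dl i) (st j))"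
    and b2': "- (2 * (n * sqrt \<epsilon>)) \<le> (\<Sum>i<n. \<Sum>j<n. C i j * ipr n (u i) (Dl j))"
    by (auto simp only: abs_le_iff)
  thus ?thesis by linarith
qed

lemma main_ineq:
  "(4/pi - 1) * real n * V - 8 * real n * sqrt \<epsilon> \<le> (\<integral>g. quad_form n C (rounding n \<rho> g) \<partial>gauss_vec n)"
proof -
  define p where "p = 2 / pi"
  define N where "N = real n"
  define q where "q = sqrt \<epsilon>"
  have p0: "0 \<le> p" unfolding p_def by simp
  have p1: "p \<le> 2/3" unfolding p_def using pi_gt3 by (simp add: divide_le_eq)
  have N0: "0 \<le> N" unfolding N_def by simp
  have eq: "\<epsilon> \<le> q" unfolding q_def using e0 e1 by (intro le_sqrt_self) auto
  have EZ: "(\<integral>g. quad_form n C (xt g) \<partial>gauss_vec n) = (\<Sum>i<n. \<Sum>j<n. C i j * Z i j) + p * (\<Sum>i<n. \<Sum>j<n. C i j * X i j)"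
  proof -
    have "(\<integral>g. quad_form n C (xt g) \<partial>gauss_vec n) = (\<Sum>i<n. \<Sum>j<n. C i j * Z i j + p * (C i j * X i j))"
      unfolding E_qf_xt p_def by (intro sum.cong refl) (simp add: Z_val algebra_simps)
    thus ?thesis by (simp add: sum.distrib sum_distrib_left)
  qed
  have h1: "- (N * (1 - p) * V) \<le> (\<Sum>i<n. \<Sum>j<n. C i j * Z i j)"
    using CZ_bound unfolding N_def p_def t0_def .
  have h2: "N * T - 3 * (N * q) \<le> (\<Sum>i<n. \<Sum>j<n. C i j * X i j)"
    using CX_bound unfolding N_def q_def .
  have h3: "V - \<epsilon> \<le> T" using trg unfolding V_def T_def by simp
  have h4: "p * (N * T - 3 * (N * q)) \<le> p * (\<Sum>i<n. \<Sum>j<n. C i j * X i j)"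
    using h2 p0 by (rule mult_left_mono)
  have h5: "p * N * (V - \<epsilon>) \<le> p * N * T" using h3 p0 N0 by (intro mult_left_mono) auto
  have h6: "p * N * \<epsilon> \<le> 1 * N * q" using p0 p1 N0 eq e0 by (intro mult_mono) auto
  have h7: "p * (N * q) \<le> (2/3) * (N * q)" using p1 N0 e0 by (intro mult_right_mono) (auto simp: q_def)
  have E1: "(\<integral>g. quad_form n C (xt g) \<partial>gauss_vec n) - 4 * (N * q) \<le> (\<integral>g. quad_form n C (rounding n \<rho> g) \<partial>gauss_vec n)"
    using E_compare unfolding N_def q_def by (simp add: mult.assoc)
  have pp: "4/pi - 1 = 2 * p - 1" unfolding p_def by simp
  have Nq: "0 \<le> N * q" using N0 e0 unfolding q_def by simp
  have h1': "- (N * V) + p * (N * V) \<le> (\<Sum>i<n. \<Sum>j<n. C i j * Z i j)"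
    using h1 by (simp add: algebra_simps)
  have h4': "p * (N * T) - 3 * (p * (N * q)) \<le> p * (\<Sum>i<n. \<Sum>j<n. C i j * X i j)"
    using h4 by (simp add: algebra_simps)
  have h5': "p * (N * V) - p * (N * \<epsilon>) \<le> p * (N * T)"
    using h5 by (simp add: algebra_simps)
  have h6': "p * (N * \<epsilon>) \<le> N * q"
    using h6 by (simp add: algebra_simps)
  have goal: "2 * (p * (N * V)) - N * V - 8 * (N * q) \<le> (\<integral>g. quad_form n C (rounding n \<rho> g) \<partial>gauss_vec n)"
    using EZ E1 h1' h4' h5' h6' h7 Nq by linarith
  have "(4/pi - 1) * N * V - 8 * N * q = 2 * (p * (N * V)) - N * V - 8 * (N * q)"
    unfolding pp by (simp add: algebra_simps)
  hence "(4/pi - 1) * N * V - 8 * N * q \<le> (\<integral>g. quad_form n C (rounding n \<rho> g) \<partial>gauss_vec n)"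
    using goal by simp
  thus ?thesis unfolding N_def q_def .
qed

end

lemma sqrt_le_powr3: "0 \<le> (e::real) \<Longrightarrow> e \<le> 1 \<Longrightarrow> sqrt e \<le> e powr (1/3)"
proof -
  assume a: "0 \<le> e" "e \<le> 1"
  have "sqrt e = e powr (1/2)" using a by (simp add: powr_half_sqrt)
  also have "\<dots> \<le> e powr (1/3)" using a by (intro powr_mono') auto
  finally show ?thesis .
qed

theorem theorem4:
  shows "\<exists>K::real. \<forall>(m::nat) (B::nat \<Rightarrow> nat \<Rightarrow> real) (\<rho>opt::nat \<Rightarrow> nat \<Rightarrow> real)
           (\<rho>::nat \<Rightarrow> nat \<Rightarrow> real) (\<epsilon>::real).
     let n = 2 * m; C = block_cost m B in
     op_norm n C = 1 \<longrightarrow>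
     sdp_optimal n C \<rho>opt \<longrightarrow>
     psd n \<rho> \<longrightarrow>
     mat_trace n (mat_mult n C \<rho>opt) - mat_trace n (mat_mult n C \<rho>) \<le> \<epsilon> \<longrightarrow>
     (\<Sum>i<n. \<bar>\<rho> i i - 1 / real n\<bar>) \<le> \<epsilon> \<longrightarrow>
     0 \<le> \<epsilon> \<longrightarrow> \<epsilon> \<le> 1/2 \<longrightarrow>
     (\<integral>g. quad_form n C (rounding n \<rho> g) \<partial>gauss_vec n)
       \<ge> (4 / pi - 1) * real n * mat_trace n (mat_mult n C \<rho>opt) - K * real n * \<epsilon> powr (1/3)"
proof (intro exI[of _ 8] allI)
  fix m :: nat and B \<rho>opt \<rho> :: "nat \<Rightarrow> nat \<Rightarrow> real" and \<epsilon> :: real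
  show "let n = 2 * m; C = block_cost m B in
     op_norm n C = 1 \<longrightarrow>
     sdp_optimal n C \<rho>opt \<longrightarrow>
     psd n \<rho> \<longrightarrow>
     mat_trace n (mat_mult n C \<rho>opt) - mat_trace n (mat_mult n C \<rho>) \<le> \<epsilon> \<longrightarrow>
     (\<Sum>i<n. \<bar>\<rho> i i - 1 / real n\<bar>) \<le> \<epsilon> \<longrightarrow>
     0 \<le> \<epsilon> \<longrightarrow> \<epsilon> \<le> 1/2 \<longrightarrow>
     (\<integral>g. quad_form n C (rounding n \<rho> g) \<partial>gauss_vec n)
       \<ge> (4 / pi - 1) * real n * mat_trace n (mat_mult n C \<rho>opt) - 8 * real n * \<epsilon> powr (1/3)"
    unfolding Let_def
  proof (intro impI)
    assume h1: "op_norm (2 * m) (block_cost m B) = 1"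
      and h2: "sdp_optimal (2 * m) (block_cost m B) \<rho>opt"
      and h3: "psd (2 * m) \<rho>"
      and h4: "mat_trace (2 * m) (mat_mult (2 * m) (block_cost m B) \<rho>opt)
               - mat_trace (2 * m) (mat_mult (2 * m) (block_cost m B) \<rho>) \<le> \<epsilon>"
      and h5: "(\<Sum>i<2 * m. \<bar>\<rho> i i - 1 / real (2 * m)\<bar>) \<le> \<epsilon>"
      and h6: "0 \<le> \<epsilon>" and h7: "\<epsilon> \<le> 1/2"
    interpret r: rsetup m B \<rho>opt \<rho> \<epsilon> "2 * m" "block_cost m B"
      using h1 h2 h3 h4 h5 h6 h7 by unfold_locales auto
    have main: "(4/pi - 1) * real (2 * m) * mat_trace (2 * m) (mat_mult (2 * m) (block_cost m B) \<rho>opt)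
        - 8 * real (2 * m) * sqrt \<epsilon> \<le> (\<integral>g. quad_form (2 * m) (block_cost m B) (rounding (2 * m) \<rho> g) \<partial>gauss_vec (2 * m))"
      using r.main_ineq unfolding r.V_def .
    have "8 * real (2 * m) * sqrt \<epsilon> \<le> 8 * real (2 * m) * \<epsilon> powr (1/3)"
      using sqrt_le_powr3[OF h6] h7 by (intro mult_left_mono) auto
    thus "(4 / pi - 1) * real (2 * m) * mat_trace (2 * m) (mat_mult (2 * m) (block_cost m B) \<rho>opt)
          - 8 * real (2 * m) * \<epsilon> powr (1 / 3)
          \<le> (\<integral>g. quad_form (2 * m) (block_cost m B) (rounding (2 * m) \<rho> g) \<partial>gauss_vec (2 * m))"
      using main by linarith
  qed
qed


end
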